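(* Let $n\ge1$, $1\le p\le n$ and $r\in[n+1]$. The set $\mathcal{T}_n^{(r,p)}$ of $(r,p)$-toppleable permutations of $[n]$ is in one-to-one correspondence with the set of $(n-p+1,p)$-Vesztergombi permutations $\sigma$ satisfying $\sigma^{-1}_{p+1}=r$, and also with the set of $(n-p+1,p)$-Callan permutations whose first entry is $r$.
   Context: Sites are $0,\dots,n+1$. A configuration in $\mathcal{S}(n,p)$ places $n+1$ distinct chips labeled $1,\dots,n+1$ with sites $0,n+1$ empty, one chip at each site of $\{1,\dots,n\}\setminus\{p\}$ and two chips at site $p$. Toppling: while some site holds at least two chips, choose such a site $i$ and two chips $\alpha<\beta$ there and move $\alpha$ to $i-1$, $\beta$ to $i+1$; it is known this terminates with at most one chip per site and the final configuration is independent of the choices. For $\pi\in S_n$, $\pi^{(r,p)}$ places at site $i$ ($1\le i\le n$) chip $\pi_i$ if $\pi_i<r$ and $\pi_i+1$ otherwise, plus chip $r$ at site $p$; $\pi$ is $(r,p)$-toppleable if the final configuration of $\pi^{(r,p)}$ read left to right is $1,2,\dots,n+1$. For $k,m\ge1$, a $(k,m)$-Vesztergombi permutation is $\sigma\in S_{k+m}$ with $-k\le\sigma_i-i\le m$ for all $i$; $\sigma^{-1}_{j}$ is the position of $j$ in $\sigma$. An $(m,k)$-Callan permutation is $\tau\in S_{m+k}$ such that every maximal contiguous block of entries all lying in $\{1,\dots,m\}$ is increasing and every maximal contiguous block of entries all lying in $\{m+1,\dots,m+k\}$ is decreasing. *)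

theory Defs
  imports "HOL-Combinatorics.Permutations"
begin

type_synonym config = "int \<Rightarrow> nat set"

definition topple_step :: "config \<Rightarrow> config \<Rightarrow> bool" where
  "topple_step c c' \<longleftrightarrow> (\<exists>i \<alpha> \<beta>. \<alpha> \<in> c i \<and> \<beta> \<in> c i \<and> \<alpha> < \<beta> \<and>
     c' = (\<lambda>j. if j = i then c i - {\<alpha>, \<beta>}
               else if j = i - 1 then c j \<union> {\<alpha>}
               else if j = i + 1 then c j \<union> {\<beta>}
               else c j))"

definition stable :: "config \<Rightarrow> bool" where
  "stable c \<longleftrightarrow> (\<forall>i. card (c i) \<le> 1 \<and> finite (c i))"

definition read_config :: "nat \<Rightarrow> config \<Rightarrow> nat list" where
  "read_config n c = concat (map (\<lambda>i. sorted_list_of_set (c i)) [0..int n + 1])"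

definition insert_config :: "nat \<Rightarrow> (nat \<Rightarrow> nat) \<Rightarrow> nat \<Rightarrow> nat \<Rightarrow> config" where
  "insert_config n \<pi> r p = (\<lambda>i.
     (if 1 \<le> i \<and> i \<le> int n then {if \<pi> (nat i) < r then \<pi> (nat i) else \<pi> (nat i) + 1} else {})
     \<union> (if i = int p then {r} else {}))"

definition toppleable :: "nat \<Rightarrow> nat \<Rightarrow> nat \<Rightarrow> (nat \<Rightarrow> nat) \<Rightarrow> bool" where
  "toppleable n r p \<pi> \<longleftrightarrow> (\<exists>c. topple_step\<^sup>*\<^sup>* (insert_config n \<pi> r p) c \<and> stable c
       \<and> read_config n c = [1..<n+2])"

definition toppleable_perms :: "nat \<Rightarrow> nat \<Rightarrow> nat \<Rightarrow> (nat \<Rightarrow> nat) set" where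
  "toppleable_perms n r p = {\<pi>. \<pi> permutes {1..n} \<and> toppleable n r p \<pi>}"

definition vesztergombi :: "nat \<Rightarrow> nat \<Rightarrow> (nat \<Rightarrow> nat) set" where
  "vesztergombi k m = {\<sigma>. \<sigma> permutes {1..k+m} \<and>
     (\<forall>i\<in>{1..k+m}. - int k \<le> int (\<sigma> i) - int i \<and> int (\<sigma> i) - int i \<le> int m)}"

text \<open>(m,k)-Callan permutations of {1..m+k}: maximal runs of small entries (in {1..m}) increase,
  maximal runs of large entries (in {m+1..m+k}) decrease; equivalently adjacent entries of
  the same kind are in increasing / decreasing order respectively.\<close>
definition callan :: "nat \<Rightarrow> nat \<Rightarrow> (nat \<Rightarrow> nat) set" where
  "callan m k = {\<tau>. \<tau> permutes {1..m+k} \<and>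
     (\<forall>i. 1 \<le> i \<and> i + 1 \<le> m + k \<longrightarrow>
        (\<tau> i \<le> m \<and> \<tau> (i+1) \<le> m \<longrightarrow> \<tau> i < \<tau> (i+1)) \<and>
        (m < \<tau> i \<and> m < \<tau> (i+1) \<longrightarrow> \<tau> i > \<tau> (i+1)))}"

end

theory Submission
  imports Defs
begin

definition sh :: "nat \<Rightarrow> nat \<Rightarrow> nat" where "sh v x = (if x < v then x else Suc x)"
definition un :: "nat \<Rightarrow> nat \<Rightarrow> nat" where "un v x = (if x \<le> v then x else x - 1)"
definition del :: "nat \<Rightarrow> nat \<Rightarrow> (nat \<Rightarrow> nat) \<Rightarrow> nat \<Rightarrow> nat" where
  "del i v \<sigma> = (\<lambda>j. un v (\<sigma> (sh i j)))"
definition ins :: "nat \<Rightarrow> nat \<Rightarrow> (nat \<Rightarrow> nat) \<Rightarrow> nat \<Rightarrow> nat" where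
  "ins i v \<tau> = (\<lambda>j. if j = i then v else sh v (\<tau> (un i j)))"

lemma un_sh[simp]: "un v (sh v x) = x" by (simp add: un_def sh_def)
lemma sh_un[simp]: "x \<noteq> v \<Longrightarrow> sh v (un v x) = x" by (auto simp: un_def sh_def)
lemma sh_neq[simp]: "sh v x \<noteq> v" by (simp add: sh_def)
lemma sh_inj[simp]: "sh v x = sh v y \<longleftrightarrow> x = y" by (auto simp: sh_def)
lemma un_inj: "x \<noteq> v \<Longrightarrow> y \<noteq> v \<Longrightarrow> un v x = un v y \<longleftrightarrow> x = y" by (auto simp: un_def)

lemma perm_inj: "\<sigma> permutes S \<Longrightarrow> \<sigma> x = \<sigma> y \<longleftrightarrow> x = y"
  by (metis permutes_inj injD)

lemma perm_range: "\<sigma> permutes {1..N} \<Longrightarrow> x \<in> {1..N} \<Longrightarrow> \<sigma> x \<in> {1..N}"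
  by (metis permutes_in_image)

lemma del_perm:
  assumes \<sigma>: "\<sigma> permutes {1..N}" and i: "1 \<le> i" "i \<le> N" and v: "\<sigma> i = v"
  shows "del i v \<sigma> permutes {1..N-1}"
proof (rule bij_imp_permutes)
  have vN: "v \<in> {1..N}" using perm_range[OF \<sigma>, of i] i v by auto
  have inj: "inj_on (del i v \<sigma>) {1..N-1}"
  proof (rule inj_onI)
    fix x y assume "x \<in> {1..N-1}" "y \<in> {1..N-1}" "del i v \<sigma> x = del i v \<sigma> y"
    then have "un v (\<sigma> (sh i x)) = un v (\<sigma> (sh i y))" by (simp add: del_def)
    moreover have "\<sigma> (sh i x) \<noteq> v" "\<sigma> (sh i y) \<noteq> v" using perm_inj[OF \<sigma>] v by (metis sh_neq)+
    ultimately have "\<sigma> (sh i x) = \<sigma> (sh i y)" using un_inj by blast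
    then show "x = y" using perm_inj[OF \<sigma>] by simp
  qed
  have into: "del i v \<sigma> ` {1..N-1} \<subseteq> {1..N-1}"
  proof
    fix y assume "y \<in> del i v \<sigma> ` {1..N-1}"
    then obtain x where x: "x \<in> {1..N-1}" "y = un v (\<sigma> (sh i x))" by (auto simp: del_def)
    have "sh i x \<in> {1..N}" using x i by (auto simp: sh_def)
    then have "\<sigma> (sh i x) \<in> {1..N}" using perm_range[OF \<sigma>] by blast
    moreover have "\<sigma> (sh i x) \<noteq> v" using perm_inj[OF \<sigma>] v by (metis sh_neq)
    ultimately show "y \<in> {1..N-1}" using x vN by (auto simp: un_def)
  qed
  show "bij_betw (del i v \<sigma>) {1..N-1} {1..N-1}"
    using inj into endo_inj_surj[of "{1..N-1}"] by (simp add: bij_betw_def)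
  fix x assume x: "x \<notin> {1..N-1}"
  show "del i v \<sigma> x = x"
  proof (cases "x = 0")
    case True
    then have "sh i x = 0" using i by (simp add: sh_def)
    moreover have "\<sigma> 0 = 0" using \<sigma> by (simp add: permutes_not_in)
    ultimately show ?thesis using True by (simp add: del_def un_def)
  next
    case False
    then have "x \<ge> N" using x by auto
    then have "sh i x = Suc x" using i by (simp add: sh_def)
    moreover have "\<sigma> (Suc x) = Suc x" using \<sigma> \<open>x \<ge> N\<close> by (simp add: permutes_not_in)
    ultimately show ?thesis using \<open>x \<ge> N\<close> vN by (simp add: del_def un_def)
  qed
qed

lemma ins_perm:
  assumes \<tau>: "\<tau> permutes {1..N-1}" and i: "1 \<le> i" "i \<le> N" and v: "1 \<le> v" "v \<le> N"
  shows "ins i v \<tau> permutes {1..N}"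
proof (rule bij_imp_permutes)
  have inj: "inj_on (ins i v \<tau>) {1..N}"
  proof (rule inj_onI)
    fix x y assume xy: "x \<in> {1..N}" "y \<in> {1..N}" "ins i v \<tau> x = ins i v \<tau> y"
    show "x = y"
    proof (cases "x = i \<or> y = i")
      case True then show ?thesis using xy(3) sh_neq by (auto simp: ins_def split: if_splits) (metis sh_neq)+
    next
      case False
      then have "\<tau> (un i x) = \<tau> (un i y)" using xy(3) by (simp add: ins_def)
      then have "un i x = un i y" using perm_inj[OF \<tau>] by simp
      then show ?thesis using False un_inj by blast
    qed
  qed
  have into: "ins i v \<tau> ` {1..N} \<subseteq> {1..N}"
  proof
    fix y assume "y \<in> ins i v \<tau> ` {1..N}"
    then obtain x where x: "x \<in> {1..N}" "y = ins i v \<tau> x" by auto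
    show "y \<in> {1..N}"
    proof (cases "x = i")
      case True then show ?thesis using x v by (simp add: ins_def)
    next
      case False
      then have "un i x \<in> {1..N-1}" using x i by (auto simp: un_def)
      then have "\<tau> (un i x) \<in> {1..N-1}" using perm_range[OF \<tau>] by blast
      then show ?thesis using x False v by (auto simp: ins_def sh_def)
    qed
  qed
  show "bij_betw (ins i v \<tau>) {1..N} {1..N}"
    using inj into endo_inj_surj[of "{1..N}"] by (simp add: bij_betw_def)
  fix x assume x: "x \<notin> {1..N}"
  show "ins i v \<tau> x = x"
  proof (cases "x = 0")
    case True
    then have "un i x = 0" "x \<noteq> i" using i by (auto simp: un_def)
    moreover have "\<tau> 0 = 0" using \<tau> by (simp add: permutes_not_in)
    ultimately show ?thesis using True v by (simp add: ins_def sh_def)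
  next
    case False
    then have "x > N" using x by auto
    then have "un i x = x - 1" "x \<noteq> i" using i by (auto simp: un_def)
    moreover have "\<tau> (x - 1) = x - 1" using \<tau> \<open>x > N\<close> by (intro permutes_not_in[OF \<tau>]) auto
    ultimately show ?thesis using \<open>x > N\<close> v by (simp add: ins_def sh_def)
  qed
qed

lemma ins_del:
  assumes \<sigma>: "\<sigma> permutes S" and v: "\<sigma> i = v"
  shows "ins i v (del i v \<sigma>) = \<sigma>"
proof
  fix j show "ins i v (del i v \<sigma>) j = \<sigma> j"
  proof (cases "j = i")
    case True then show ?thesis using v by (simp add: ins_def)
  next
    case False
    then have "sh i (un i j) = j" by simp
    moreover have "\<sigma> j \<noteq> v" using perm_inj[OF \<sigma>] v False by metis
    ultimately show ?thesis using False by (simp add: ins_def del_def)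
  qed
qed

lemma del_ins: "del i v (ins i v \<tau>) = \<tau>"
  by (rule ext) (simp add: ins_def del_def)

lemma ins_at[simp]: "ins i v \<tau> i = v" by (simp add: ins_def)

lemma bij_del:
  assumes A: "\<And>\<sigma>. \<sigma> \<in> A \<Longrightarrow> \<sigma> permutes {1..N} \<and> \<sigma> i = v \<and> del i v \<sigma> \<in> B"
    and B: "\<And>\<tau>. \<tau> \<in> B \<Longrightarrow> ins i v \<tau> \<in> A"
  shows "bij_betw (del i v) A B"
proof (rule bij_betw_byWitness[where f' = "ins i v"])
  show "\<forall>a\<in>A. ins i v (del i v a) = a" using A ins_del by blast
  show "\<forall>a'\<in>B. del i v (ins i v a') = a'" by (simp add: del_ins)
  show "del i v ` A \<subseteq> B" using A by auto
  show "ins i v ` B \<subseteq> A" using B by auto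
qed

lemma vesz_iff: "\<sigma> \<in> vesztergombi a b \<longleftrightarrow> \<sigma> permutes {1..a+b} \<and> (\<forall>i\<in>{1..a+b}. i \<le> \<sigma> i + a \<and> \<sigma> i \<le> i + b)"
  unfolding vesztergombi_def by (auto; (drule bspec, assumption)?; linarith)

definition Vr :: "nat \<Rightarrow> nat \<Rightarrow> nat \<Rightarrow> (nat \<Rightarrow> nat) set" where
  "Vr a b r = {\<sigma> \<in> vesztergombi a b. \<sigma> r = b + 1}"

lemma VA:
  assumes a: "1 \<le> a"
  shows "bij_betw (del 1 (b+1)) (Vr a b 1) (vesztergombi (a-1) b)"
proof (rule bij_del[where N = "a+b"])
  fix \<sigma> assume "\<sigma> \<in> Vr a b 1"
  then have p: "\<sigma> permutes {1..a+b}" and c: "\<And>i. i \<in> {1..a+b} \<Longrightarrow> i \<le> \<sigma> i + a \<and> \<sigma> i \<le> i + b"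
    and s1: "\<sigma> 1 = b+1" by (auto simp: Vr_def vesz_iff)
  have "del 1 (b+1) \<sigma> permutes {1..a+b-1}" using del_perm[OF p _ _ s1] a by auto
  then have p': "del 1 (b+1) \<sigma> permutes {1..a-1+b}" using a by (simp add: algebra_simps)
  have "\<forall>j\<in>{1..a-1+b}. j \<le> del 1 (b+1) \<sigma> j + (a-1) \<and> del 1 (b+1) \<sigma> j \<le> j + b"
  proof
    fix j assume j: "j \<in> {1..a-1+b}"
    have sh: "sh 1 j = j+1" using j by (simp add: sh_def)
    have cj: "j+1 \<le> \<sigma> (j+1) + a \<and> \<sigma> (j+1) \<le> j+1 + b" using c[of "j+1"] j a by auto
    have ne: "\<sigma> (j+1) \<noteq> b+1" using perm_inj[OF p, of "j+1" 1] s1 j by auto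
    have rg: "\<sigma> (j+1) \<in> {1..a+b}" using perm_range[OF p, of "j+1"] j a by auto
    have d: "del 1 (b+1) \<sigma> j = un (b+1) (\<sigma> (j+1))" unfolding del_def sh by simp
    show "j \<le> del 1 (b+1) \<sigma> j + (a-1) \<and> del 1 (b+1) \<sigma> j \<le> j + b"
      unfolding d using cj ne rg j a by (auto simp: un_def)
  qed
  then show "\<sigma> permutes {1..a+b} \<and> \<sigma> 1 = b+1 \<and> del 1 (b+1) \<sigma> \<in> vesztergombi (a-1) b"
    using p p' s1 by (simp add: vesz_iff)
next
  fix \<tau> assume "\<tau> \<in> vesztergombi (a-1) b"
  then have p: "\<tau> permutes {1..a+b-1}" and c: "\<And>i. i \<in> {1..a+b-1} \<Longrightarrow> i \<le> \<tau> i + (a-1) \<and> \<tau> i \<le> i + b"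
    using a by (auto simp: vesz_iff algebra_simps)
  have p': "ins 1 (b+1) \<tau> permutes {1..a+b}" using ins_perm[OF p] a by auto
  have "\<forall>j\<in>{1..a+b}. j \<le> ins 1 (b+1) \<tau> j + a \<and> ins 1 (b+1) \<tau> j \<le> j + b"
  proof
    fix j assume j: "j \<in> {1..a+b}"
    show "j \<le> ins 1 (b+1) \<tau> j + a \<and> ins 1 (b+1) \<tau> j \<le> j + b"
    proof (cases "j = 1")
      case True then show ?thesis by simp
    next
      case False
      then have un: "un 1 j = j - 1" using j by (simp add: un_def)
      have cj: "j - 1 \<le> \<tau> (j-1) + (a-1) \<and> \<tau> (j-1) \<le> j - 1 + b" using j False by (intro c) auto
      have d: "ins 1 (b+1) \<tau> j = sh (b+1) (\<tau> (j-1))" using False unfolding ins_def un by simp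
      show ?thesis unfolding d using cj False j a by (auto simp: sh_def)
    qed
  qed
  then show "ins 1 (b+1) \<tau> \<in> Vr a b 1" using p' by (simp add: Vr_def vesz_iff)
qed

lemma VB:
  assumes b: "1 \<le> b" and a: "1 \<le> a"
  shows "bij_betw (del (a+b) (b+1)) (Vr a b (a+b)) (vesztergombi a (b-1))"
proof (rule bij_del[where N = "a+b"])
  fix \<sigma> assume "\<sigma> \<in> Vr a b (a+b)"
  then have p: "\<sigma> permutes {1..a+b}" and c: "\<And>i. i \<in> {1..a+b} \<Longrightarrow> i \<le> \<sigma> i + a \<and> \<sigma> i \<le> i + b"
    and s1: "\<sigma> (a+b) = b+1" by (auto simp: Vr_def vesz_iff)
  have "del (a+b) (b+1) \<sigma> permutes {1..a+b-1}" using del_perm[OF p _ _ s1] b by auto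
  then have p': "del (a+b) (b+1) \<sigma> permutes {1..a+(b-1)}" using b by (simp add: algebra_simps)
  have "\<forall>j\<in>{1..a+(b-1)}. j \<le> del (a+b) (b+1) \<sigma> j + a \<and> del (a+b) (b+1) \<sigma> j \<le> j + (b-1)"
  proof
    fix j assume j: "j \<in> {1..a+(b-1)}"
    have sh: "sh (a+b) j = j" using j b by (auto simp: sh_def)
    have cj: "j \<le> \<sigma> j + a \<and> \<sigma> j \<le> j + b" using j b by (intro c) auto
    have ne: "\<sigma> j \<noteq> b+1" using perm_inj[OF p, of j "a+b"] s1 j b by auto
    have rg: "\<sigma> j \<in> {1..a+b}" using perm_range[OF p, of j] j b by auto
    have d: "del (a+b) (b+1) \<sigma> j = un (b+1) (\<sigma> j)" unfolding del_def sh by simp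
    show "j \<le> del (a+b) (b+1) \<sigma> j + a \<and> del (a+b) (b+1) \<sigma> j \<le> j + (b-1)"
      unfolding d using cj ne rg j b by (auto simp: un_def)
  qed
  then show "\<sigma> permutes {1..a+b} \<and> \<sigma> (a+b) = b+1 \<and> del (a+b) (b+1) \<sigma> \<in> vesztergombi a (b-1)"
    using p p' s1 by (simp add: vesz_iff)
next
  fix \<tau> assume "\<tau> \<in> vesztergombi a (b-1)"
  then have p: "\<tau> permutes {1..a+b-1}" and c: "\<And>i. i \<in> {1..a+b-1} \<Longrightarrow> i \<le> \<tau> i + a \<and> \<tau> i \<le> i + (b-1)"
    using b by (auto simp: vesz_iff algebra_simps)
  have p': "ins (a+b) (b+1) \<tau> permutes {1..a+b}" using ins_perm[OF p, of "a+b" "b+1"] a b by auto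
  have "\<forall>j\<in>{1..a+b}. j \<le> ins (a+b) (b+1) \<tau> j + a \<and> ins (a+b) (b+1) \<tau> j \<le> j + b"
  proof
    fix j assume j: "j \<in> {1..a+b}"
    show "j \<le> ins (a+b) (b+1) \<tau> j + a \<and> ins (a+b) (b+1) \<tau> j \<le> j + b"
    proof (cases "j = a+b")
      case True then show ?thesis using a by simp
    next
      case False
      then have un: "un (a+b) j = j" using j by (simp add: un_def)
      have cj: "j \<le> \<tau> j + a \<and> \<tau> j \<le> j + (b-1)" using j False by (intro c) auto
      have d: "ins (a+b) (b+1) \<tau> j = sh (b+1) (\<tau> j)" using False unfolding ins_def un by simp
      show ?thesis unfolding d using cj False j b by (auto simp: sh_def)
    qed
  qed
  then show "ins (a+b) (b+1) \<tau> \<in> Vr a b (a+b)" using p' by (simp add: Vr_def vesz_iff)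
qed

definition swp :: "nat \<Rightarrow> (nat \<Rightarrow> nat) \<Rightarrow> nat \<Rightarrow> nat" where
  "swp r \<sigma> = \<sigma> \<circ> transpose r (Suc r)"

lemma swp_swp[simp]: "swp r (swp r \<sigma>) = \<sigma>"
  by (rule ext) (simp add: swp_def transpose_def)

lemma swp_inj: "inj_on (swp r) A"
  by (metis inj_onI swp_swp)

lemma swp_perm: "\<sigma> permutes {1..N} \<Longrightarrow> 1 \<le> r \<Longrightarrow> r + 1 \<le> N \<Longrightarrow> swp r \<sigma> permutes {1..N}"
  unfolding swp_def by (rule permutes_compose[OF permutes_swap_id]) auto

lemma swp_app: "swp r \<sigma> j = (if j = r then \<sigma> (Suc r) else if j = Suc r then \<sigma> r else \<sigma> j)"
  by (simp add: swp_def transpose_def)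

lemma card_split:
  assumes "A = f ` B \<union> S" "f ` B \<inter> S = {}" "inj_on f B" "finite A"
  shows "card A = card B + card S"
proof -
  have "finite (f ` B)" "finite S" using assms(1,4) by auto
  then have "card A = card (f ` B) + card S" using assms(1,2) card_Un_disjoint by metis
  then show ?thesis using card_image[OF assms(3)] by simp
qed

lemma Vr_finite: "finite (Vr a b r)"
proof -
  have "Vr a b r \<subseteq> {p. p permutes {1..a+b}}" by (auto simp: Vr_def vesz_iff)
  then show ?thesis using finite_permutations[of "{1..a+b}"] finite_subset by auto
qed

lemma VR1_split:
  assumes r: "1 \<le> r" "r + 1 \<le> a"
  shows "card (Vr a b r) = card (Vr a b (r+1)) + card {\<sigma> \<in> Vr a b r. \<sigma> (r+1) = r+b+1}"
proof (rule card_split[where f = "swp r"])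
  show "inj_on (swp r) (Vr a b (r+1))" by (rule swp_inj)
  show "finite (Vr a b r)" by (rule Vr_finite)
  have i: "swp r \<sigma> \<in> Vr a b r \<and> swp r \<sigma> (r+1) \<noteq> r+b+1" if s: "\<sigma> \<in> Vr a b (r+1)" for \<sigma>
  proof -
    have p: "\<sigma> permutes {1..a+b}" and c: "\<And>i. i \<in> {1..a+b} \<Longrightarrow> i \<le> \<sigma> i + a \<and> \<sigma> i \<le> i + b"
      and s1: "\<sigma> (r+1) = b+1" using s by (auto simp: Vr_def vesz_iff)
    have cr: "r \<le> \<sigma> r + a \<and> \<sigma> r \<le> r + b" using r by (intro c) auto
    have "\<forall>i\<in>{1..a+b}. i \<le> swp r \<sigma> i + a \<and> swp r \<sigma> i \<le> i + b"
    proof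
      fix i assume i: "i \<in> {1..a+b}"
      show "i \<le> swp r \<sigma> i + a \<and> swp r \<sigma> i \<le> i + b"
      proof (cases "i = r \<or> i = Suc r")
        case True then show ?thesis using cr s1 r by (auto simp: swp_app)
      next
        case False then show ?thesis using c[OF i] by (auto simp: swp_app)
      qed
    qed
    moreover have "swp r \<sigma> permutes {1..a+b}" using swp_perm[OF p] r by auto
    ultimately show ?thesis using cr s1 by (auto simp: Vr_def vesz_iff swp_app)
  qed
  have ii: "swp r \<sigma> \<in> Vr a b (r+1)" if s: "\<sigma> \<in> Vr a b r" "\<sigma> (r+1) \<noteq> r+b+1" for \<sigma>
  proof -
    have p: "\<sigma> permutes {1..a+b}" and c: "\<And>i. i \<in> {1..a+b} \<Longrightarrow> i \<le> \<sigma> i + a \<and> \<sigma> i \<le> i + b"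
      and s1: "\<sigma> r = b+1" using s by (auto simp: Vr_def vesz_iff)
    have cr: "r+1 \<le> \<sigma> (r+1) + a \<and> \<sigma> (r+1) \<le> r + 1 + b" using r by (intro c) auto
    have "\<forall>i\<in>{1..a+b}. i \<le> swp r \<sigma> i + a \<and> swp r \<sigma> i \<le> i + b"
    proof
      fix i assume i: "i \<in> {1..a+b}"
      show "i \<le> swp r \<sigma> i + a \<and> swp r \<sigma> i \<le> i + b"
      proof (cases "i = r \<or> i = Suc r")
        case True then show ?thesis using cr s1 r s(2) by (auto simp: swp_app)
      next
        case False then show ?thesis using c[OF i] by (auto simp: swp_app)
      qed
    qed
    moreover have "swp r \<sigma> permutes {1..a+b}" using swp_perm[OF p] r by auto
    ultimately show ?thesis using cr s1 by (auto simp: Vr_def vesz_iff swp_app)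
  qed
  show "swp r ` Vr a b (r + 1) \<inter> {\<sigma> \<in> Vr a b r. \<sigma> (r + 1) = r + b + 1} = {}" using i by auto
  show "Vr a b r = swp r ` Vr a b (r + 1) \<union> {\<sigma> \<in> Vr a b r. \<sigma> (r + 1) = r + b + 1}"
  proof (intro equalityI subsetI)
    fix \<sigma> assume s: "\<sigma> \<in> Vr a b r"
    show "\<sigma> \<in> swp r ` Vr a b (r + 1) \<union> {\<sigma> \<in> Vr a b r. \<sigma> (r + 1) = r + b + 1}"
    proof (cases "\<sigma> (r+1) = r+b+1")
      case False
      then have "swp r \<sigma> \<in> Vr a b (r+1)" using ii s by blast
      then have "swp r (swp r \<sigma>) \<in> swp r ` Vr a b (r+1)" by blast
      then show ?thesis by simp
    qed (use s in auto)
  qed (use i in auto)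
qed

lemma VR1_bij:
  assumes r: "1 \<le> r" "r + 1 \<le> a"
  shows "bij_betw (del (r+1) (r+b+1)) {\<sigma> \<in> Vr a b r. \<sigma> (r+1) = r+b+1} (Vr (a-1) b r)"
proof (rule bij_del[where N = "a+b"])
  fix \<sigma> assume "\<sigma> \<in> {\<sigma> \<in> Vr a b r. \<sigma> (r+1) = r+b+1}"
  then have p: "\<sigma> permutes {1..a+b}" and c: "\<And>i. i \<in> {1..a+b} \<Longrightarrow> i \<le> \<sigma> i + a \<and> \<sigma> i \<le> i + b"
    and s1: "\<sigma> r = b+1" and s2: "\<sigma> (r+1) = r+b+1" by (auto simp: Vr_def vesz_iff)
  have "del (r+1) (r+b+1) \<sigma> permutes {1..a+b-1}" using del_perm[OF p _ _ s2] r by auto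
  then have p': "del (r+1) (r+b+1) \<sigma> permutes {1..a-1+b}" using r by (simp add: algebra_simps)
  have "\<forall>j\<in>{1..a-1+b}. j \<le> del (r+1) (r+b+1) \<sigma> j + (a-1) \<and> del (r+1) (r+b+1) \<sigma> j \<le> j + b"
  proof
    fix j assume j: "j \<in> {1..a-1+b}"
    have shr: "sh (r+1) j \<in> {1..a+b}" "sh (r+1) j \<noteq> r+1" using j r by (auto simp: sh_def)
    have cj: "sh (r+1) j \<le> \<sigma> (sh (r+1) j) + a \<and> \<sigma> (sh (r+1) j) \<le> sh (r+1) j + b" using shr by (intro c) auto
    have ne: "\<sigma> (sh (r+1) j) \<noteq> r+b+1" using perm_inj[OF p, of "sh (r+1) j" "r+1"] s2 shr by auto
    have d: "del (r+1) (r+b+1) \<sigma> j = un (r+b+1) (\<sigma> (sh (r+1) j))" unfolding del_def by simp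
    show "j \<le> del (r+1) (r+b+1) \<sigma> j + (a-1) \<and> del (r+1) (r+b+1) \<sigma> j \<le> j + b"
      unfolding d using cj ne j r by (auto simp: un_def sh_def split: if_splits)
  qed
  moreover have "del (r+1) (r+b+1) \<sigma> r = b+1" using s1 by (simp add: del_def sh_def un_def)
  ultimately show "\<sigma> permutes {1..a+b} \<and> \<sigma> (r+1) = r+b+1 \<and> del (r+1) (r+b+1) \<sigma> \<in> Vr (a-1) b r"
    using p p' s2 by (simp add: vesz_iff Vr_def)
next
  fix \<tau> assume "\<tau> \<in> Vr (a-1) b r"
  then have p: "\<tau> permutes {1..a+b-1}" and c: "\<And>i. i \<in> {1..a+b-1} \<Longrightarrow> i \<le> \<tau> i + (a-1) \<and> \<tau> i \<le> i + b"
    and t1: "\<tau> r = b+1"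
    using r by (auto simp: vesz_iff Vr_def algebra_simps)
  have p': "ins (r+1) (r+b+1) \<tau> permutes {1..a+b}" using ins_perm[OF p, of "r+1" "r+b+1"] r by auto
  have "\<forall>j\<in>{1..a+b}. j \<le> ins (r+1) (r+b+1) \<tau> j + a \<and> ins (r+1) (r+b+1) \<tau> j \<le> j + b"
  proof
    fix j assume j: "j \<in> {1..a+b}"
    show "j \<le> ins (r+1) (r+b+1) \<tau> j + a \<and> ins (r+1) (r+b+1) \<tau> j \<le> j + b"
    proof (cases "j = r+1")
      case True then show ?thesis by simp
    next
      case False
      then have unr: "un (r+1) j \<in> {1..a+b-1}" using j r by (auto simp: un_def)
      have cj: "un (r+1) j \<le> \<tau> (un (r+1) j) + (a-1) \<and> \<tau> (un (r+1) j) \<le> un (r+1) j + b"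
        using unr by (intro c) auto
      have d: "ins (r+1) (r+b+1) \<tau> j = sh (r+b+1) (\<tau> (un (r+1) j))" using False unfolding ins_def by simp
      show ?thesis unfolding d using cj False j r by (auto simp: sh_def un_def split: if_splits)
    qed
  qed
  moreover have "ins (r+1) (r+b+1) \<tau> r = b+1" using t1 r by (simp add: ins_def sh_def un_def)
  ultimately show "ins (r+1) (r+b+1) \<tau> \<in> {\<sigma> \<in> Vr a b r. \<sigma> (r+1) = r+b+1}" using p' by (simp add: Vr_def vesz_iff)
qed

lemma VR3_split:
  assumes r: "a < r" "r + 1 \<le> a + b"
  shows "card (Vr a b (r+1)) = card (Vr a b r) + card {\<sigma> \<in> Vr a b (r+1). \<sigma> r = r - a}"
proof (rule card_split[where f = "swp r"])
  show "inj_on (swp r) (Vr a b r)" by (rule swp_inj)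
  show "finite (Vr a b (r+1))" by (rule Vr_finite)
  have i: "swp r \<sigma> \<in> Vr a b (r+1) \<and> swp r \<sigma> r \<noteq> r - a" if s: "\<sigma> \<in> Vr a b r" for \<sigma>
  proof -
    have p: "\<sigma> permutes {1..a+b}" and c: "\<And>i. i \<in> {1..a+b} \<Longrightarrow> i \<le> \<sigma> i + a \<and> \<sigma> i \<le> i + b"
      and s1: "\<sigma> r = b+1" using s by (auto simp: Vr_def vesz_iff)
    have cr: "r + 1 \<le> \<sigma> (r+1) + a \<and> \<sigma> (r+1) \<le> r + 1 + b" using r by (intro c) auto
    have rg: "\<sigma> (r+1) \<le> a + b" using perm_range[OF p, of "r+1"] r by auto
    have "\<forall>i\<in>{1..a+b}. i \<le> swp r \<sigma> i + a \<and> swp r \<sigma> i \<le> i + b"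
    proof
      fix i assume i: "i \<in> {1..a+b}"
      show "i \<le> swp r \<sigma> i + a \<and> swp r \<sigma> i \<le> i + b"
      proof (cases "i = r \<or> i = Suc r")
        case True then show ?thesis using cr s1 r rg by (auto simp: swp_app)
      next
        case False then show ?thesis using c[OF i] by (auto simp: swp_app)
      qed
    qed
    moreover have "swp r \<sigma> permutes {1..a+b}" using swp_perm[OF p] r by auto
    ultimately show ?thesis using cr s1 r by (auto simp: Vr_def vesz_iff swp_app)
  qed
  have ii: "swp r \<sigma> \<in> Vr a b r" if s: "\<sigma> \<in> Vr a b (r+1)" "\<sigma> r \<noteq> r - a" for \<sigma>
  proof -
    have p: "\<sigma> permutes {1..a+b}" and c: "\<And>i. i \<in> {1..a+b} \<Longrightarrow> i \<le> \<sigma> i + a \<and> \<sigma> i \<le> i + b"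
      and s1: "\<sigma> (r+1) = b+1" using s by (auto simp: Vr_def vesz_iff)
    have cr: "r \<le> \<sigma> r + a \<and> \<sigma> r \<le> r + b" using r by (intro c) auto
    have "\<forall>i\<in>{1..a+b}. i \<le> swp r \<sigma> i + a \<and> swp r \<sigma> i \<le> i + b"
    proof
      fix i assume i: "i \<in> {1..a+b}"
      show "i \<le> swp r \<sigma> i + a \<and> swp r \<sigma> i \<le> i + b"
      proof (cases "i = r \<or> i = Suc r")
        case True then show ?thesis using cr s1 r s(2) by (auto simp: swp_app)
      next
        case False then show ?thesis using c[OF i] by (auto simp: swp_app)
      qed
    qed
    moreover have "swp r \<sigma> permutes {1..a+b}" using swp_perm[OF p] r by auto
    ultimately show ?thesis using cr s1 by (auto simp: Vr_def vesz_iff swp_app)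
  qed
  show "swp r ` Vr a b r \<inter> {\<sigma> \<in> Vr a b (r+1). \<sigma> r = r - a} = {}" using i by auto
  show "Vr a b (r+1) = swp r ` Vr a b r \<union> {\<sigma> \<in> Vr a b (r+1). \<sigma> r = r - a}"
  proof (intro equalityI subsetI)
    fix \<sigma> assume s: "\<sigma> \<in> Vr a b (r+1)"
    show "\<sigma> \<in> swp r ` Vr a b r \<union> {\<sigma> \<in> Vr a b (r+1). \<sigma> r = r - a}"
    proof (cases "\<sigma> r = r - a")
      case False
      then have "swp r \<sigma> \<in> Vr a b r" using ii s by blast
      then have "swp r (swp r \<sigma>) \<in> swp r ` Vr a b r" by blast
      then show ?thesis by simp
    qed (use s in auto)
  qed (use i in auto)
qed

lemma VR3_bij:
  assumes r: "a < r" "r + 1 \<le> a + b"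
  shows "bij_betw (del r (r-a)) {\<sigma> \<in> Vr a b (r+1). \<sigma> r = r - a} (Vr a (b-1) r)"
proof (rule bij_del[where N = "a+b"])
  fix \<sigma> assume "\<sigma> \<in> {\<sigma> \<in> Vr a b (r+1). \<sigma> r = r - a}"
  then have p: "\<sigma> permutes {1..a+b}" and c: "\<And>i. i \<in> {1..a+b} \<Longrightarrow> i \<le> \<sigma> i + a \<and> \<sigma> i \<le> i + b"
    and s1: "\<sigma> (r+1) = b+1" and s2: "\<sigma> r = r - a" by (auto simp: Vr_def vesz_iff)
  have "del r (r-a) \<sigma> permutes {1..a+b-1}" using del_perm[OF p _ _ s2] r by auto
  then have p': "del r (r-a) \<sigma> permutes {1..a+(b-1)}" using r by (simp add: algebra_simps)
  have "\<forall>j\<in>{1..a+(b-1)}. j \<le> del r (r-a) \<sigma> j + a \<and> del r (r-a) \<sigma> j \<le> j + (b-1)"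
  proof
    fix j assume j: "j \<in> {1..a+(b-1)}"
    have shr: "sh r j \<in> {1..a+b}" "sh r j \<noteq> r" using j r by (auto simp: sh_def)
    have cj: "sh r j \<le> \<sigma> (sh r j) + a \<and> \<sigma> (sh r j) \<le> sh r j + b" using shr by (intro c) auto
    have ne: "\<sigma> (sh r j) \<noteq> r - a" using perm_inj[OF p, of "sh r j" r] s2 shr by auto
    have rg: "\<sigma> (sh r j) \<le> a + b" using perm_range[OF p, of "sh r j"] shr by auto
    have d: "del r (r-a) \<sigma> j = un (r-a) (\<sigma> (sh r j))" unfolding del_def by simp
    show "j \<le> del r (r-a) \<sigma> j + a \<and> del r (r-a) \<sigma> j \<le> j + (b-1)"
      unfolding d using cj ne j r rg by (auto simp: un_def sh_def split: if_splits)
  qed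
  moreover have "del r (r-a) \<sigma> r = b-1+1" using s1 r by (simp add: del_def sh_def un_def)
  ultimately show "\<sigma> permutes {1..a+b} \<and> \<sigma> r = r-a \<and> del r (r-a) \<sigma> \<in> Vr a (b-1) r"
    using p p' s2 by (simp add: vesz_iff Vr_def)
next
  fix \<tau> assume "\<tau> \<in> Vr a (b-1) r"
  then have p: "\<tau> permutes {1..a+b-1}" and c: "\<And>i. i \<in> {1..a+b-1} \<Longrightarrow> i \<le> \<tau> i + a \<and> \<tau> i \<le> i + (b-1)"
    and t1: "\<tau> r = b"
    using r by (auto simp: vesz_iff Vr_def algebra_simps)
  have p': "ins r (r-a) \<tau> permutes {1..a+b}" using ins_perm[OF p, of r "r-a"] r by auto
  have "\<forall>j\<in>{1..a+b}. j \<le> ins r (r-a) \<tau> j + a \<and> ins r (r-a) \<tau> j \<le> j + b"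
  proof
    fix j assume j: "j \<in> {1..a+b}"
    show "j \<le> ins r (r-a) \<tau> j + a \<and> ins r (r-a) \<tau> j \<le> j + b"
    proof (cases "j = r")
      case True then show ?thesis using r by simp
    next
      case False
      then have unr: "un r j \<in> {1..a+b-1}" using j r by (auto simp: un_def)
      have cj: "un r j \<le> \<tau> (un r j) + a \<and> \<tau> (un r j) \<le> un r j + (b-1)"
        using unr by (intro c) auto
      have d: "ins r (r-a) \<tau> j = sh (r-a) (\<tau> (un r j))" using False unfolding ins_def by simp
      show ?thesis unfolding d using cj False j r by (auto simp: sh_def un_def split: if_splits)
    qed
  qed
  moreover have "ins r (r-a) \<tau> (r+1) = b+1" using t1 r by (simp add: ins_def sh_def un_def)
  ultimately show "ins r (r-a) \<tau> \<in> {\<sigma> \<in> Vr a b (r+1). \<sigma> r = r - a}" using p' by (simp add: Vr_def vesz_iff)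
qed

definition cc :: "nat \<Rightarrow> nat \<Rightarrow> nat \<Rightarrow> bool" where
  "cc a x y \<longleftrightarrow> (x \<le> a \<and> y \<le> a \<longrightarrow> x < y) \<and> (a < x \<and> a < y \<longrightarrow> y < x)"

lemma callan_iff: "\<tau> \<in> callan a b \<longleftrightarrow> \<tau> permutes {1..a+b} \<and> (\<forall>i. 1 \<le> i \<and> i + 1 \<le> a + b \<longrightarrow> cc a (\<tau> i) (\<tau> (i+1)))"
  unfolding callan_def cc_def by auto

definition Cr :: "nat \<Rightarrow> nat \<Rightarrow> nat \<Rightarrow> (nat \<Rightarrow> nat) set" where
  "Cr a b r = {\<tau> \<in> callan a b. \<tau> 1 = r}"

lemma cc_un_le: "x \<noteq> v \<Longrightarrow> y \<noteq> v \<Longrightarrow> v \<le> a \<Longrightarrow> 1 \<le> v \<Longrightarrow> cc (a-1) (un v x) (un v y) = cc a x y"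
  unfolding cc_def un_def by auto

lemma cc_un_gt: "x \<noteq> v \<Longrightarrow> y \<noteq> v \<Longrightarrow> a < v \<Longrightarrow> cc a (un v x) (un v y) = cc a x y"
  unfolding cc_def un_def by auto

lemma cc_sh_le: "v \<le> a \<Longrightarrow> 1 \<le> v \<Longrightarrow> cc a (sh v x) (sh v y) = cc (a-1) x y"
  using cc_un_le[of "sh v x" v "sh v y" a] by simp

lemma cc_sh_gt: "a < v \<Longrightarrow> cc a (sh v x) (sh v y) = cc a x y"
  using cc_un_gt[of "sh v x" v "sh v y" a] by simp

lemma Cr_finite: "finite (Cr a b r)"
proof -
  have "Cr a b r \<subseteq> {p. p permutes {1..a+b}}" by (auto simp: Cr_def callan_iff)
  then show ?thesis using finite_permutations[of "{1..a+b}"] finite_subset by auto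
qed

lemma CA:
  assumes a: "1 \<le> a"
  shows "bij_betw (del 1 1) (Cr a b 1) (callan (a-1) b)"
proof (rule bij_del[where N = "a+b"])
  fix \<tau> assume "\<tau> \<in> Cr a b 1"
  then have p: "\<tau> permutes {1..a+b}" and c: "\<And>i. 1 \<le> i \<Longrightarrow> i + 1 \<le> a + b \<Longrightarrow> cc a (\<tau> i) (\<tau> (i+1))"
    and s1: "\<tau> 1 = 1" by (auto simp: Cr_def callan_iff)
  have "del 1 1 \<tau> permutes {1..a+b-1}" using del_perm[OF p _ _ s1] a by auto
  then have p': "del 1 1 \<tau> permutes {1..a-1+b}" using a by (simp add: algebra_simps)
  have "cc (a-1) (del 1 1 \<tau> i) (del 1 1 \<tau> (i+1))" if i: "1 \<le> i" "i + 1 \<le> a - 1 + b" for i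
  proof -
    have ne: "\<tau> (i+1) \<noteq> 1" "\<tau> (i+2) \<noteq> 1" using perm_inj[OF p, of "i+1" 1] perm_inj[OF p, of "i+2" 1] s1 i by auto
    have "del 1 1 \<tau> i = un 1 (\<tau> (i+1))" "del 1 1 \<tau> (i+1) = un 1 (\<tau> (i+2))" using i by (simp_all add: del_def sh_def)
    then show ?thesis using cc_un_le[OF ne a] c[of "i+1"] i a by simp
  qed
  then show "\<tau> permutes {1..a+b} \<and> \<tau> 1 = 1 \<and> del 1 1 \<tau> \<in> callan (a-1) b"
    using p p' s1 by (simp add: callan_iff)
next
  fix \<tau> assume "\<tau> \<in> callan (a-1) b"
  then have p: "\<tau> permutes {1..a+b-1}" and c: "\<And>i. 1 \<le> i \<Longrightarrow> i + 1 \<le> a + b - 1 \<Longrightarrow> cc (a-1) (\<tau> i) (\<tau> (i+1))"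
    using a by (auto simp: callan_iff algebra_simps)
  have p': "ins 1 1 \<tau> permutes {1..a+b}" using ins_perm[OF p, of 1 1] a by auto
  have "cc a (ins 1 1 \<tau> i) (ins 1 1 \<tau> (i+1))" if i: "1 \<le> i" "i + 1 \<le> a + b" for i
  proof (cases "i = 1")
    case True
    have "\<tau> 1 \<in> {1..a+b-1}" using perm_range[OF p, of 1] i by auto
    then show ?thesis using a True by (simp add: ins_def cc_def sh_def un_def)
  next
    case False
    have "ins 1 1 \<tau> i = sh 1 (\<tau> (i-1))" "ins 1 1 \<tau> (i+1) = sh 1 (\<tau> i)"
      using False i by (simp_all add: ins_def un_def)
    then show ?thesis using cc_sh_le[OF a] c[of "i-1"] False i a by simp
  qed
  then show "ins 1 1 \<tau> \<in> Cr a b 1" using p' by (simp add: Cr_def callan_iff)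
qed

lemma CB:
  assumes b: "1 \<le> b" and a: "1 \<le> a"
  shows "bij_betw (del 1 (a+b)) (Cr a b (a+b)) (callan a (b-1))"
proof (rule bij_del[where N = "a+b"])
  fix \<tau> assume "\<tau> \<in> Cr a b (a+b)"
  then have p: "\<tau> permutes {1..a+b}" and c: "\<And>i. 1 \<le> i \<Longrightarrow> i + 1 \<le> a + b \<Longrightarrow> cc a (\<tau> i) (\<tau> (i+1))"
    and s1: "\<tau> 1 = a+b" by (auto simp: Cr_def callan_iff)
  have "del 1 (a+b) \<tau> permutes {1..a+b-1}" using del_perm[OF p _ _ s1] a by auto
  then have p': "del 1 (a+b) \<tau> permutes {1..a+(b-1)}" using b by (simp add: algebra_simps)
  have "cc a (del 1 (a+b) \<tau> i) (del 1 (a+b) \<tau> (i+1))" if i: "1 \<le> i" "i + 1 \<le> a + (b-1)" for i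
  proof -
    have ne: "\<tau> (i+1) \<noteq> a+b" "\<tau> (i+2) \<noteq> a+b" using perm_inj[OF p, of "i+1" 1] perm_inj[OF p, of "i+2" 1] s1 i by auto
    have "del 1 (a+b) \<tau> i = un (a+b) (\<tau> (i+1))" "del 1 (a+b) \<tau> (i+1) = un (a+b) (\<tau> (i+2))" using i by (simp_all add: del_def sh_def)
    then show ?thesis using cc_un_gt[OF ne] c[of "i+1"] i a b by simp
  qed
  then show "\<tau> permutes {1..a+b} \<and> \<tau> 1 = a+b \<and> del 1 (a+b) \<tau> \<in> callan a (b-1)"
    using p p' s1 by (simp add: callan_iff)
next
  fix \<tau> assume "\<tau> \<in> callan a (b-1)"
  then have p: "\<tau> permutes {1..a+b-1}" and c: "\<And>i. 1 \<le> i \<Longrightarrow> i + 1 \<le> a + b - 1 \<Longrightarrow> cc a (\<tau> i) (\<tau> (i+1))"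
    using b by (auto simp: callan_iff algebra_simps)
  have p': "ins 1 (a+b) \<tau> permutes {1..a+b}" using ins_perm[OF p, of 1 "a+b"] a by auto
  have "cc a (ins 1 (a+b) \<tau> i) (ins 1 (a+b) \<tau> (i+1))" if i: "1 \<le> i" "i + 1 \<le> a + b" for i
  proof (cases "i = 1")
    case True
    have "\<tau> 1 \<in> {1..a+b-1}" using perm_range[OF p, of 1] i by auto
    then show ?thesis using a b True by (auto simp add: ins_def cc_def sh_def un_def)
  next
    case False
    have "ins 1 (a+b) \<tau> i = sh (a+b) (\<tau> (i-1))" "ins 1 (a+b) \<tau> (i+1) = sh (a+b) (\<tau> i)"
      using False i by (simp_all add: ins_def un_def)
    then show ?thesis using cc_sh_gt[of a "a+b"] c[of "i-1"] False i a b by simp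
  qed
  then show "ins 1 (a+b) \<tau> \<in> Cr a b (a+b)" using p' by (simp add: Cr_def callan_iff)
qed

definition vsw :: "nat \<Rightarrow> (nat \<Rightarrow> nat) \<Rightarrow> nat \<Rightarrow> nat" where
  "vsw r \<tau> = transpose r (Suc r) \<circ> \<tau>"

lemma vsw_vsw[simp]: "vsw r (vsw r \<sigma>) = \<sigma>"
  by (rule ext) (simp add: vsw_def transpose_def)

lemma vsw_inj: "inj_on (vsw r) A"
  by (metis inj_onI vsw_vsw)

lemma vsw_perm: "\<sigma> permutes {1..N} \<Longrightarrow> 1 \<le> r \<Longrightarrow> r + 1 \<le> N \<Longrightarrow> vsw r \<sigma> permutes {1..N}"
  unfolding vsw_def by (rule permutes_compose[OF _ permutes_swap_id]) auto

lemma vsw_app: "vsw r \<sigma> j = transpose r (Suc r) (\<sigma> j)"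
  by (simp add: vsw_def)

lemma cc_t: "r + 1 \<le> a \<or> a < r \<Longrightarrow> \<not>(x = r \<and> y = Suc r) \<Longrightarrow> \<not>(x = Suc r \<and> y = r) \<Longrightarrow>
  cc a (transpose r (Suc r) x) (transpose r (Suc r) y) = cc a x y"
  unfolding cc_def transpose_def by (simp split: if_splits; arith)

lemma vsw_main:
  assumes r: "r + 1 \<le> a \<or> a < r" "1 \<le> r" "r + 1 \<le> a + b"
    and s: "\<tau> \<in> Cr a b y0" "\<tau> 2 \<noteq> y1"
    and y: "y0 = r \<and> y1 = Suc r \<or> y0 = Suc r \<and> y1 = r"
  shows "vsw r \<tau> \<in> Cr a b y1 \<and> vsw r \<tau> 2 \<noteq> y0"
proof -
  have p: "\<tau> permutes {1..a+b}" and c: "\<And>i. 1 \<le> i \<Longrightarrow> i + 1 \<le> a + b \<Longrightarrow> cc a (\<tau> i) (\<tau> (i+1))"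
    and s1: "\<tau> 1 = y0" using s by (auto simp: Cr_def callan_iff)
  have ty: "transpose r (Suc r) y0 = y1" "transpose r (Suc r) y1 = y0" using y by (auto simp: transpose_def)
  have "cc a (vsw r \<tau> i) (vsw r \<tau> (i+1))" if i: "1 \<le> i" "i + 1 \<le> a + b" for i
  proof -
    have ci: "cc a (\<tau> i) (\<tau> (i+1))" using c i by blast
    have nn: "\<tau> i \<noteq> y0 \<and> \<tau> (i+1) \<noteq> y0" if "i \<noteq> 1"
      using perm_inj[OF p, of i 1] perm_inj[OF p, of "i+1" 1] s1 that i by auto
    have n1: "\<not>(\<tau> i = r \<and> \<tau> (i+1) = Suc r)"
    proof
      assume h: "\<tau> i = r \<and> \<tau> (i+1) = Suc r"
      show False
      proof (cases "i = 1")
        case True then show False using h s1 s(2) y by (auto simp: numeral_2_eq_2)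
      next
        case False then show False using nn h y by auto
      qed
    qed
    have n2: "\<not>(\<tau> i = Suc r \<and> \<tau> (i+1) = r)"
    proof
      assume h: "\<tau> i = Suc r \<and> \<tau> (i+1) = r"
      show False
      proof (cases "i = 1")
        case True then show False using h s1 s(2) y by (auto simp: numeral_2_eq_2)
      next
        case False then show False using nn h y by auto
      qed
    qed
    show ?thesis using cc_t[OF r(1) n1 n2] ci by (simp add: vsw_app)
  qed
  moreover have "vsw r \<tau> permutes {1..a+b}" using vsw_perm[OF p] r by auto
  moreover have "vsw r \<tau> 1 = y1" using s1 ty by (simp add: vsw_app)
  moreover have "vsw r \<tau> 2 \<noteq> y0"
  proof
    assume "vsw r \<tau> 2 = y0"
    then have "transpose r (Suc r) (transpose r (Suc r) (\<tau> 2)) = transpose r (Suc r) y0" by (simp add: vsw_app)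
    then have "\<tau> 2 = y1" using ty by simp
    then show False using s(2) by simp
  qed
  ultimately show ?thesis by (simp add: Cr_def callan_iff)
qed

lemma Cr_2:
  assumes "\<tau> \<in> Cr a b y0" "2 \<le> a + b" "\<not> cc a y0 y1"
  shows "\<tau> 2 \<noteq> y1"
proof -
  have "cc a (\<tau> 1) (\<tau> (1+1))" using assms(1,2) by (auto simp: Cr_def callan_iff)
  then show ?thesis using assms(1,3) by (auto simp: Cr_def numeral_2_eq_2)
qed

lemma CR1_split:
  assumes r: "1 \<le> r" "r + 1 \<le> a"
  shows "card (Cr a b r) = card (Cr a b (r+1)) + card {\<tau> \<in> Cr a b r. \<tau> 2 = r+1}"
proof (rule card_split[where f = "vsw r"])
  show "inj_on (vsw r) (Cr a b (r+1))" by (rule vsw_inj)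
  show "finite (Cr a b r)" by (rule Cr_finite)
  have i: "vsw r \<tau> \<in> Cr a b r \<and> vsw r \<tau> 2 \<noteq> r + 1" if s: "\<tau> \<in> Cr a b (r+1)" for \<tau>
  proof -
    have "\<tau> 2 \<noteq> r" using Cr_2[OF s, of r] r by (simp add: cc_def)
    then show ?thesis using vsw_main[of r a b \<tau> "Suc r" r] s r by auto
  qed
  have ii: "vsw r \<tau> \<in> Cr a b (r+1)" if s: "\<tau> \<in> Cr a b r" "\<tau> 2 \<noteq> r+1" for \<tau>
    using vsw_main[of r a b \<tau> r "Suc r"] s r by auto
  show "vsw r ` Cr a b (r+1) \<inter> {\<tau> \<in> Cr a b r. \<tau> 2 = r+1} = {}" using i by auto
  show "Cr a b r = vsw r ` Cr a b (r+1) \<union> {\<tau> \<in> Cr a b r. \<tau> 2 = r+1}"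
  proof (intro equalityI subsetI)
    fix \<tau> assume s: "\<tau> \<in> Cr a b r"
    show "\<tau> \<in> vsw r ` Cr a b (r+1) \<union> {\<tau> \<in> Cr a b r. \<tau> 2 = r+1}"
    proof (cases "\<tau> 2 = r+1")
      case False
      then have "vsw r \<tau> \<in> Cr a b (r+1)" using ii s by blast
      then have "vsw r (vsw r \<tau>) \<in> vsw r ` Cr a b (r+1)" by blast
      then show ?thesis by simp
    qed (use s in auto)
  qed (use i in auto)
qed

lemma CR3_split:
  assumes r: "a < r" "r + 1 \<le> a + b"
  shows "card (Cr a b (r+1)) = card (Cr a b r) + card {\<tau> \<in> Cr a b (r+1). \<tau> 2 = r}"
proof (rule card_split[where f = "vsw r"])
  show "inj_on (vsw r) (Cr a b r)" by (rule vsw_inj)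
  show "finite (Cr a b (r+1))" by (rule Cr_finite)
  have i: "vsw r \<tau> \<in> Cr a b (r+1) \<and> vsw r \<tau> 2 \<noteq> r" if s: "\<tau> \<in> Cr a b r" for \<tau>
  proof -
    have "\<tau> 2 \<noteq> r+1" using Cr_2[OF s, of "r+1"] r by (simp add: cc_def)
    then show ?thesis using vsw_main[of r a b \<tau> r "Suc r"] s r by auto
  qed
  have ii: "vsw r \<tau> \<in> Cr a b r" if s: "\<tau> \<in> Cr a b (r+1)" "\<tau> 2 \<noteq> r" for \<tau>
    using vsw_main[of r a b \<tau> "Suc r" r] s r by auto
  show "vsw r ` Cr a b r \<inter> {\<tau> \<in> Cr a b (r+1). \<tau> 2 = r} = {}" using i by auto
  show "Cr a b (r+1) = vsw r ` Cr a b r \<union> {\<tau> \<in> Cr a b (r+1). \<tau> 2 = r}"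
  proof (intro equalityI subsetI)
    fix \<tau> assume s: "\<tau> \<in> Cr a b (r+1)"
    show "\<tau> \<in> vsw r ` Cr a b r \<union> {\<tau> \<in> Cr a b (r+1). \<tau> 2 = r}"
    proof (cases "\<tau> 2 = r")
      case False
      then have "vsw r \<tau> \<in> Cr a b r" using ii s by blast
      then have "vsw r (vsw r \<tau>) \<in> vsw r ` Cr a b r" by blast
      then show ?thesis by simp
    qed (use s in auto)
  qed (use i in auto)
qed

lemma CR1_bij:
  assumes r: "1 \<le> r" "r + 1 \<le> a"
  shows "bij_betw (del 1 r) {\<tau> \<in> Cr a b r. \<tau> 2 = r+1} (Cr (a-1) b r)"
proof (rule bij_del[where N = "a+b"])
  fix \<tau> assume "\<tau> \<in> {\<tau> \<in> Cr a b r. \<tau> 2 = r+1}"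
  then have p: "\<tau> permutes {1..a+b}" and c: "\<And>i. 1 \<le> i \<Longrightarrow> i + 1 \<le> a + b \<Longrightarrow> cc a (\<tau> i) (\<tau> (i+1))"
    and s1: "\<tau> 1 = r" and s2: "\<tau> 2 = r+1" by (auto simp: Cr_def callan_iff)
  have "del 1 r \<tau> permutes {1..a+b-1}" using del_perm[OF p _ _ s1] r by auto
  then have p': "del 1 r \<tau> permutes {1..a-1+b}" using r by (simp add: algebra_simps)
  have "cc (a-1) (del 1 r \<tau> i) (del 1 r \<tau> (i+1))" if i: "1 \<le> i" "i + 1 \<le> a - 1 + b" for i
  proof -
    have ne: "\<tau> (i+1) \<noteq> r" "\<tau> (i+2) \<noteq> r" using perm_inj[OF p, of "i+1" 1] perm_inj[OF p, of "i+2" 1] s1 i by auto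
    have "del 1 r \<tau> i = un r (\<tau> (i+1))" "del 1 r \<tau> (i+1) = un r (\<tau> (i+2))" using i by (simp_all add: del_def sh_def)
    then show ?thesis using cc_un_le[OF ne] c[of "i+1"] i r by simp
  qed
  moreover have "del 1 r \<tau> 1 = r" using s2 by (simp add: del_def sh_def un_def numeral_2_eq_2)
  ultimately show "\<tau> permutes {1..a+b} \<and> \<tau> 1 = r \<and> del 1 r \<tau> \<in> Cr (a-1) b r"
    using p p' s1 by (simp add: callan_iff Cr_def)
next
  fix \<tau> assume "\<tau> \<in> Cr (a-1) b r"
  then have p: "\<tau> permutes {1..a+b-1}" and c: "\<And>i. 1 \<le> i \<Longrightarrow> i + 1 \<le> a + b - 1 \<Longrightarrow> cc (a-1) (\<tau> i) (\<tau> (i+1))"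
    and t1: "\<tau> 1 = r"
    using r by (auto simp: callan_iff Cr_def algebra_simps)
  have p': "ins 1 r \<tau> permutes {1..a+b}" using ins_perm[OF p, of 1 r] r by auto
  have "cc a (ins 1 r \<tau> i) (ins 1 r \<tau> (i+1))" if i: "1 \<le> i" "i + 1 \<le> a + b" for i
  proof (cases "i = 1")
    case True
    then show ?thesis using r t1 by (simp add: ins_def cc_def sh_def un_def)
  next
    case False
    have "ins 1 r \<tau> i = sh r (\<tau> (i-1))" "ins 1 r \<tau> (i+1) = sh r (\<tau> i)"
      using False i by (simp_all add: ins_def un_def)
    then show ?thesis using cc_sh_le[of r a] c[of "i-1"] False i r by simp
  qed
  moreover have "ins 1 r \<tau> 2 = r + 1" using t1 by (simp add: ins_def sh_def un_def)
  ultimately show "ins 1 r \<tau> \<in> {\<tau> \<in> Cr a b r. \<tau> 2 = r+1}" using p' by (simp add: Cr_def callan_iff)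
qed

lemma CR3_bij:
  assumes r: "a < r" "r + 1 \<le> a + b"
  shows "bij_betw (del 1 (r+1)) {\<tau> \<in> Cr a b (r+1). \<tau> 2 = r} (Cr a (b-1) r)"
proof (rule bij_del[where N = "a+b"])
  fix \<tau> assume "\<tau> \<in> {\<tau> \<in> Cr a b (r+1). \<tau> 2 = r}"
  then have p: "\<tau> permutes {1..a+b}" and c: "\<And>i. 1 \<le> i \<Longrightarrow> i + 1 \<le> a + b \<Longrightarrow> cc a (\<tau> i) (\<tau> (i+1))"
    and s1: "\<tau> 1 = r+1" and s2: "\<tau> 2 = r" by (auto simp: Cr_def callan_iff)
  have "del 1 (r+1) \<tau> permutes {1..a+b-1}" using del_perm[OF p _ _ s1] r by auto
  then have p': "del 1 (r+1) \<tau> permutes {1..a+(b-1)}" using r by (simp add: algebra_simps)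
  have "cc a (del 1 (r+1) \<tau> i) (del 1 (r+1) \<tau> (i+1))" if i: "1 \<le> i" "i + 1 \<le> a + (b-1)" for i
  proof -
    have ne: "\<tau> (i+1) \<noteq> r+1" "\<tau> (i+2) \<noteq> r+1" using perm_inj[OF p, of "i+1" 1] perm_inj[OF p, of "i+2" 1] s1 i by auto
    have "del 1 (r+1) \<tau> i = un (r+1) (\<tau> (i+1))" "del 1 (r+1) \<tau> (i+1) = un (r+1) (\<tau> (i+2))" using i by (simp_all add: del_def sh_def)
    then show ?thesis using cc_un_gt[OF ne] c[of "i+1"] i r by simp
  qed
  moreover have "del 1 (r+1) \<tau> 1 = r" using s2 by (simp add: del_def sh_def un_def numeral_2_eq_2)
  ultimately show "\<tau> permutes {1..a+b} \<and> \<tau> 1 = r+1 \<and> del 1 (r+1) \<tau> \<in> Cr a (b-1) r"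
    using p p' s1 by (simp add: callan_iff Cr_def)
next
  fix \<tau> assume "\<tau> \<in> Cr a (b-1) r"
  then have p: "\<tau> permutes {1..a+b-1}" and c: "\<And>i. 1 \<le> i \<Longrightarrow> i + 1 \<le> a + b - 1 \<Longrightarrow> cc a (\<tau> i) (\<tau> (i+1))"
    and t1: "\<tau> 1 = r"
    using r by (auto simp: callan_iff Cr_def algebra_simps)
  have p': "ins 1 (r+1) \<tau> permutes {1..a+b}" using ins_perm[OF p, of 1 "r+1"] r by auto
  have "cc a (ins 1 (r+1) \<tau> i) (ins 1 (r+1) \<tau> (i+1))" if i: "1 \<le> i" "i + 1 \<le> a + b" for i
  proof (cases "i = 1")
    case True
    then show ?thesis using r t1 by (simp add: ins_def cc_def sh_def un_def)
  next
    case False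
    have "ins 1 (r+1) \<tau> i = sh (r+1) (\<tau> (i-1))" "ins 1 (r+1) \<tau> (i+1) = sh (r+1) (\<tau> i)"
      using False i by (simp_all add: ins_def un_def)
    then show ?thesis using cc_sh_gt[of a "r+1"] c[of "i-1"] False i r by simp
  qed
  moreover have "ins 1 (r+1) \<tau> 2 = r" using t1 by (simp add: ins_def sh_def un_def)
  ultimately show "ins 1 (r+1) \<tau> \<in> {\<tau> \<in> Cr a b (r+1). \<tau> 2 = r}" using p' by (simp add: Cr_def callan_iff)
qed

lemma perm_ge_id:
  assumes p: "\<sigma> permutes {1..N::nat}" and ge: "\<forall>i\<in>{1..N}. i \<le> \<sigma> i"
  shows "\<sigma> = id"
proof -
  have eq: "sum id {1..N} = sum (id \<circ> \<sigma>) {1..N}" by (rule sum.permute[OF p])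
  have "\<forall>i\<in>{1..N}. \<sigma> i = i"
  proof (rule ccontr)
    assume "\<not> (\<forall>i\<in>{1..N}. \<sigma> i = i)"
    then obtain i where "i \<in> {1..N}" "\<sigma> i \<noteq> i" by blast
    moreover have "i \<le> \<sigma> i" using ge calculation(1) by blast
    ultimately have "i \<in> {1..N}" "i < \<sigma> i" by auto
    then have "sum id {1..N} < sum (id \<circ> \<sigma>) {1..N}"
      using ge by (intro sum_strict_mono_ex1) auto
    then show False using eq by simp
  qed
  then show ?thesis
  proof -
    assume h: "\<forall>i\<in>{1..N}. \<sigma> i = i"
    show ?thesis
    proof
      fix x show "\<sigma> x = id x" using h permutes_not_in[OF p, of x] by (cases "x \<in> {1..N}") auto
    qed
  qed
qed

lemma perm_le_id:
  assumes p: "\<sigma> permutes {1..N::nat}" and le: "\<forall>i\<in>{1..N}. \<sigma> i \<le> i"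
  shows "\<sigma> = id"
proof -
  have eq: "sum id {1..N} = sum (id \<circ> \<sigma>) {1..N}" by (rule sum.permute[OF p])
  have "\<forall>i\<in>{1..N}. \<sigma> i = i"
  proof (rule ccontr)
    assume "\<not> (\<forall>i\<in>{1..N}. \<sigma> i = i)"
    then obtain i where "i \<in> {1..N}" "\<sigma> i \<noteq> i" by blast
    moreover have "\<sigma> i \<le> i" using le calculation(1) by blast
    ultimately have "i \<in> {1..N}" "\<sigma> i < i" by auto
    then have "sum (id \<circ> \<sigma>) {1..N} < sum id {1..N}"
      using le by (intro sum_strict_mono_ex1) auto
    then show False using eq by simp
  qed
  then show ?thesis
  proof -
    assume h: "\<forall>i\<in>{1..N}. \<sigma> i = i"
    show ?thesis
    proof
      fix x show "\<sigma> x = id x" using h permutes_not_in[OF p, of x] by (cases "x \<in> {1..N}") auto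
    qed
  qed
qed

lemma perm_incr_id:
  assumes p: "\<sigma> permutes {1..N::nat}" and inc: "\<And>i. 1 \<le> i \<Longrightarrow> i + 1 \<le> N \<Longrightarrow> \<sigma> i < \<sigma> (i+1)"
  shows "\<sigma> = id"
proof -
  have "i \<le> \<sigma> i" if "i \<in> {1..N}" for i
    using that
  proof (induction i)
    case 0 then show ?case by simp
  next
    case (Suc i)
    show ?case
    proof (cases "i = 0")
      case True then show ?thesis using perm_range[OF p, of 1] Suc by auto
    next
      case False
      then have "i \<le> \<sigma> i" using Suc by auto
      moreover have "\<sigma> i < \<sigma> (i+1)" using inc[of i] False Suc by auto
      ultimately show ?thesis by simp
    qed
  qed
  then show ?thesis using perm_ge_id[OF p] by blast
qed

lemma V0a: "vesztergombi 0 b = {id}"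
proof -
  have "\<sigma> = id" if "\<sigma> \<in> vesztergombi 0 b" for \<sigma>
    using that perm_ge_id[of \<sigma> b] by (auto simp: vesz_iff)
  moreover have "id \<in> vesztergombi 0 b" by (simp add: vesz_iff permutes_id)
  ultimately show ?thesis by blast
qed

lemma V0b: "vesztergombi a 0 = {id}"
proof -
  have "\<sigma> = id" if "\<sigma> \<in> vesztergombi a 0" for \<sigma>
    using that perm_le_id[of \<sigma> a] by (auto simp: vesz_iff)
  moreover have "id \<in> vesztergombi a 0" by (simp add: vesz_iff permutes_id)
  ultimately show ?thesis by blast
qed

lemma C0b: "callan a 0 = {id}"
proof -
  have "\<tau> = id" if t: "\<tau> \<in> callan a 0" for \<tau>
  proof -
    have p: "\<tau> permutes {1..a}" using t by (simp add: callan_iff)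
    have "\<tau> i < \<tau> (i+1)" if i: "1 \<le> i" "i + 1 \<le> a" for i
    proof -
      have "\<tau> i \<le> a" "\<tau> (i+1) \<le> a" using perm_range[OF p, of i] perm_range[OF p, of "i+1"] i by auto
      then show ?thesis using t i by (auto simp: callan_iff cc_def)
    qed
    then show ?thesis using perm_incr_id[OF p] by blast
  qed
  moreover have "id \<in> callan a 0" by (simp add: callan_iff permutes_id cc_def)
  ultimately show ?thesis by blast
qed

definition rv :: "nat \<Rightarrow> nat \<Rightarrow> nat" where
  "rv N x = (if x \<in> {1..N} then N + 1 - x else x)"

lemma rv_rv[simp]: "rv N (rv N x) = x" by (auto simp: rv_def)

lemma rv_perm: "rv N permutes {1..N}"
proof (rule bij_imp_permutes)
  show "bij_betw (rv N) {1..N} {1..N}"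
    by (rule bij_betw_byWitness[where f' = "rv N"]) (auto simp: rv_def)
qed (auto simp: rv_def)

lemma C0a: "callan 0 b = {rv b}"
proof -
  have "\<tau> = rv b" if t: "\<tau> \<in> callan 0 b" for \<tau>
  proof -
    have p: "\<tau> permutes {1..b}" using t by (simp add: callan_iff)
    have p2: "rv b \<circ> \<tau> permutes {1..b}" by (rule permutes_compose[OF p rv_perm])
    have "(rv b \<circ> \<tau>) i < (rv b \<circ> \<tau>) (i+1)" if i: "1 \<le> i" "i + 1 \<le> b" for i
    proof -
      have "\<tau> i \<in> {1..b}" "\<tau> (i+1) \<in> {1..b}" using perm_range[OF p, of i] perm_range[OF p, of "i+1"] i by auto
      moreover have "\<tau> (i+1) < \<tau> i" using t i calculation by (auto simp: callan_iff cc_def)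
      ultimately show ?thesis by (auto simp: rv_def)
    qed
    then have "rv b \<circ> \<tau> = id" using perm_incr_id[OF p2] by blast
    then have "rv b \<circ> (rv b \<circ> \<tau>) = rv b" by simp
    then show ?thesis by (simp add: fun_eq_iff)
  qed
  moreover have "rv b \<in> callan 0 b" using rv_perm[of b] by (auto simp add: callan_iff cc_def rv_def)
  ultimately show ?thesis by blast
qed

lemma V_total:
  assumes "1 \<le> b" "1 \<le> a"
  shows "card (vesztergombi a b) = (\<Sum>r\<in>{1..a+b}. card (Vr a b r))"
proof -
  have "vesztergombi a b = (\<Union>r\<in>{1..a+b}. Vr a b r)"
  proof (intro equalityI subsetI)
    fix \<sigma> assume s: "\<sigma> \<in> vesztergombi a b"
    then have p: "\<sigma> permutes {1..a+b}" by (simp add: vesz_iff)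
    have "b + 1 \<in> \<sigma> ` {1..a+b}" using permutes_image[OF p] assms by auto
    then obtain r where "r \<in> {1..a+b}" "\<sigma> r = b + 1" by auto
    then show "\<sigma> \<in> (\<Union>r\<in>{1..a+b}. Vr a b r)" using s by (auto simp: Vr_def)
  qed (auto simp: Vr_def)
  moreover have "card (\<Union>r\<in>{1..a+b}. Vr a b r) = (\<Sum>r\<in>{1..a+b}. card (Vr a b r))"
  proof (rule card_UN_disjoint)
    show "\<forall>i\<in>{1..a+b}. \<forall>j\<in>{1..a+b}. i \<noteq> j \<longrightarrow> Vr a b i \<inter> Vr a b j = {}"
    proof (intro ballI impI)
      fix i j :: nat assume "i \<noteq> j"
      show "Vr a b i \<inter> Vr a b j = {}"
      proof (rule ccontr)
        assume "Vr a b i \<inter> Vr a b j \<noteq> {}"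
        then obtain \<sigma> where "\<sigma> \<in> Vr a b i" "\<sigma> \<in> Vr a b j" by blast
        then have "\<sigma> permutes {1..a+b}" "\<sigma> i = \<sigma> j" by (auto simp: Vr_def vesz_iff)
        then show False using perm_inj \<open>i \<noteq> j\<close> by metis
      qed
    qed
  qed (auto simp: Vr_finite)
  ultimately show ?thesis by simp
qed

lemma C_total:
  assumes "1 \<le> a + b"
  shows "card (callan a b) = (\<Sum>r\<in>{1..a+b}. card (Cr a b r))"
proof -
  have "callan a b = (\<Union>r\<in>{1..a+b}. Cr a b r)"
  proof (intro equalityI subsetI)
    fix \<tau> assume s: "\<tau> \<in> callan a b"
    then have p: "\<tau> permutes {1..a+b}" by (simp add: callan_iff)
    have "\<tau> 1 \<in> {1..a+b}" using perm_range[OF p, of 1] assms by auto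
    then show "\<tau> \<in> (\<Union>r\<in>{1..a+b}. Cr a b r)" using s by (auto simp: Cr_def)
  qed (auto simp: Cr_def)
  moreover have "card (\<Union>r\<in>{1..a+b}. Cr a b r) = (\<Sum>r\<in>{1..a+b}. card (Cr a b r))"
  proof (rule card_UN_disjoint)
    show "\<forall>i\<in>{1..a+b}. \<forall>j\<in>{1..a+b}. i \<noteq> j \<longrightarrow> Cr a b i \<inter> Cr a b j = {}"
      by (auto simp: Cr_def)
  qed (auto simp: Cr_finite)
  ultimately show ?thesis by simp
qed


lemma main_count:
  "card (vesztergombi a b) = card (callan a b) \<and>
   (\<forall>r. 1 \<le> a \<longrightarrow> 1 \<le> b \<longrightarrow> 1 \<le> r \<longrightarrow> r \<le> a + b \<longrightarrow> card (Vr a b r) = card (Cr a b r))"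
proof (induction "a + b" arbitrary: a b rule: less_induct)
  case less
  show ?case
  proof (cases "a = 0 \<or> b = 0")
    case True
    then show ?thesis using V0a V0b C0a C0b by auto
  next
    case False
    then have a: "1 \<le> a" and b: "1 \<le> b" by auto
    have IHt: "\<And>a' b'. a' + b' < a + b \<Longrightarrow> card (vesztergombi a' b') = card (callan a' b')"
      using less by blast
    have IHr: "\<And>a' b' r. a' + b' < a + b \<Longrightarrow> 1 \<le> a' \<Longrightarrow> 1 \<le> b' \<Longrightarrow> 1 \<le> r \<Longrightarrow> r \<le> a' + b' \<Longrightarrow>
       card (Vr a' b' r) = card (Cr a' b' r)"
      using less by blast
    have low: "card (Vr a b r) = card (Cr a b r)" if "1 \<le> r" "r \<le> a" for r
      using that
    proof (induction r)
      case 0 then show ?case by simp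
    next
      case (Suc r)
      show ?case
      proof (cases "r = 0")
        case True
        have "card (Vr a b 1) = card (vesztergombi (a-1) b)" using bij_betw_same_card[OF VA[OF a]] .
        also have "\<dots> = card (callan (a-1) b)" using IHt[of "a-1" b] a by simp
        also have "\<dots> = card (Cr a b 1)" using bij_betw_same_card[OF CA[OF a]] by simp
        finally show ?thesis using True by simp
      next
        case False
        then have r: "1 \<le> r" "r + 1 \<le> a" using Suc by auto
        have e1: "card (Vr a b r) = card (Vr a b (r+1)) + card (Vr (a-1) b r)"
          using VR1_split[OF r] bij_betw_same_card[OF VR1_bij[OF r]] by simp
        have e2: "card (Cr a b r) = card (Cr a b (r+1)) + card (Cr (a-1) b r)"
          using CR1_split[OF r] bij_betw_same_card[OF CR1_bij[OF r]] by simp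
        have e3: "card (Vr (a-1) b r) = card (Cr (a-1) b r)" using IHr[of "a-1" b r] r b by simp
        have "card (Vr a b r) = card (Cr a b r)" using Suc r by simp
        then show ?thesis using e1 e2 e3 by simp
      qed
    qed
    have high: "card (Vr a b (a+b-k)) = card (Cr a b (a+b-k))" if "k < b" for k
      using that
    proof (induction k)
      case 0
      have "card (Vr a b (a+b)) = card (vesztergombi a (b-1))" using bij_betw_same_card[OF VB[OF b a]] .
      also have "\<dots> = card (callan a (b-1))" using IHt[of a "b-1"] b by simp
      also have "\<dots> = card (Cr a b (a+b))" using bij_betw_same_card[OF CB[OF b a]] by simp
      finally show ?case by simp
    next
      case (Suc k)
      define r where "r = a + b - Suc k"
      have r: "a < r" "r + 1 \<le> a + b" using Suc.prems by (auto simp: r_def)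
      have rr: "r + 1 = a + b - k" using Suc.prems by (auto simp: r_def)
      have e1: "card (Vr a b (r+1)) = card (Vr a b r) + card (Vr a (b-1) r)"
        using VR3_split[OF r] bij_betw_same_card[OF VR3_bij[OF r]] by simp
      have e2: "card (Cr a b (r+1)) = card (Cr a b r) + card (Cr a (b-1) r)"
        using CR3_split[OF r] bij_betw_same_card[OF CR3_bij[OF r]] by simp
      have e3: "card (Vr a (b-1) r) = card (Cr a (b-1) r)" using IHr[of a "b-1" r] r a b by simp
      have "card (Vr a b (r+1)) = card (Cr a b (r+1))" using Suc rr by simp
      then show ?case using e1 e2 e3 by (simp add: r_def)
    qed
    have all: "card (Vr a b r) = card (Cr a b r)" if "1 \<le> r" "r \<le> a + b" for r
    proof (cases "r \<le> a")
      case True then show ?thesis using low that by blast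
    next
      case False
      then show ?thesis using high[of "a + b - r"] that by simp
    qed
    have "card (vesztergombi a b) = (\<Sum>r\<in>{1..a+b}. card (Vr a b r))" using V_total b a by blast
    also have "\<dots> = (\<Sum>r\<in>{1..a+b}. card (Cr a b r))" using all by (intro sum.cong) auto
    also have "\<dots> = card (callan a b)" using C_total[of a b] a by simp
    finally show ?thesis using all by blast
  qed
qed

definition cmp :: "nat \<Rightarrow> (nat \<Rightarrow> nat) \<Rightarrow> nat \<Rightarrow> nat" where
  "cmp k L = (if L (Suc k) < L k then L(k := L (Suc k), Suc k := L k) else L)"

fun pass :: "nat \<Rightarrow> nat \<Rightarrow> (nat \<Rightarrow> nat) \<Rightarrow> nat \<Rightarrow> nat" where
  "pass s 0 L = L"
| "pass s (Suc q) L = pass s q (cmp (s+q) L)"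

fun net :: "nat \<Rightarrow> nat \<Rightarrow> nat \<Rightarrow> (nat \<Rightarrow> nat) \<Rightarrow> nat \<Rightarrow> nat" where
  "net p s 0 L = L"
| "net p s (Suc j) L = net p (Suc s) j (pass s p L)"

lemma cmp_lo: "cmp m L m = min (L m) (L (Suc m))" by (simp add: cmp_def)
lemma cmp_hi: "cmp m L (Suc m) = max (L m) (L (Suc m))" by (simp add: cmp_def)
lemma cmp_other: "k \<noteq> m \<Longrightarrow> k \<noteq> Suc m \<Longrightarrow> cmp m L k = L k" by (simp add: cmp_def)

lemma Min_eq_crit:
  fixes X Y :: "nat set"
  assumes "finite X" "finite Y" "X \<noteq> {}" "Y \<noteq> {}"
    and "\<forall>y\<in>Y. \<exists>x\<in>X. x \<le> y" "\<forall>x\<in>X. \<exists>y\<in>Y. y \<le> x"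
  shows "Min X = Min Y"
proof (rule antisym)
  obtain y where "y \<in> Y" "Min Y = y" using Min_in[OF assms(2,4)] by blast
  then obtain x where "x \<in> X" "x \<le> Min Y" using assms(5) by auto
  then show "Min X \<le> Min Y" using Min_le[OF assms(1)] by (meson order_trans)
next
  obtain x where "x \<in> X" "Min X = x" using Min_in[OF assms(1,3)] by blast
  then obtain y where "y \<in> Y" "y \<le> Min X" using assms(6) by auto
  then show "Min Y \<le> Min X" using Min_le[OF assms(2)] by (meson order_trans)
qed

lemma Min_cmp:
  assumes "k \<le> m"
  shows "Min (cmp m L ` {k..m}) = Min (L ` {k..Suc m})"
proof (rule Min_eq_crit)
  show "\<forall>y\<in>L ` {k..Suc m}. \<exists>x\<in>cmp m L ` {k..m}. x \<le> y"
  proof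
    fix y assume "y \<in> L ` {k..Suc m}"
    then obtain j where j: "j \<in> {k..Suc m}" "y = L j" by auto
    show "\<exists>x\<in>cmp m L ` {k..m}. x \<le> y"
    proof (cases "j < m")
      case True
      then have "cmp m L j = y" using j by (simp add: cmp_other)
      then show ?thesis using j True by force
    next
      case False
      then have "j = m \<or> j = Suc m" using j by auto
      then have "cmp m L m \<le> y" using j by (auto simp: cmp_lo)
      then show ?thesis using assms by force
    qed
  qed
  show "\<forall>x\<in>cmp m L ` {k..m}. \<exists>y\<in>L ` {k..Suc m}. y \<le> x"
  proof
    fix x assume "x \<in> cmp m L ` {k..m}"
    then obtain j where j: "j \<in> {k..m}" "x = cmp m L j" by auto
    show "\<exists>y\<in>L ` {k..Suc m}. y \<le> x"
    proof (cases "j < m")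
      case True
      then have "L j = x" using j by (simp add: cmp_other)
      then show ?thesis using j by force
    next
      case False
      then have "j = m" using j by auto
      then have "x = L m \<or> x = L (Suc m)" using j by (auto simp: cmp_lo min_def)
      then show ?thesis using j by force
    qed
  qed
qed (use assms in auto)

lemma pass_formula:
  "pass s q L k = (if k < s \<or> s + q < k then L k else if k = s then Min (L ` {s..s+q})
                   else max (L (k-1)) (Min (L ` {k..s+q})))"
proof (induction q arbitrary: L)
  case 0
  then show ?case by auto
next
  case (Suc q)
  let ?L' = "cmp (s+q) L"
  have IH: "pass s (Suc q) L k = (if k < s \<or> s + q < k then ?L' k else if k = s then Min (?L' ` {s..s+q})
                   else max (?L' (k-1)) (Min (?L' ` {k..s+q})))" using Suc by simp
  show ?case
  proof (cases "k < s \<or> s + Suc q < k")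
    case True then show ?thesis using IH by (auto simp: cmp_other)
  next
    case False
    show ?thesis
    proof (cases "k = Suc (s + q)")
      case True
      then show ?thesis using IH by (simp add: cmp_hi)
    next
      case False2: False
      then have kq: "s \<le> k" "k \<le> s + q" using False by auto
      have m: "Min (?L' ` {k..s+q}) = Min (L ` {k..s + Suc q})" using Min_cmp[OF kq(2)] by simp
      show ?thesis
      proof (cases "k = s")
        case True
        then show ?thesis using IH m kq by simp
      next
        case False
        then have "?L' (k-1) = L (k-1)" using kq by (intro cmp_other) auto
        then show ?thesis using IH m kq False by simp
      qed
    qed
  qed
qed


definition Perm :: "nat \<Rightarrow> (nat \<Rightarrow> nat) \<Rightarrow> bool" where
  "Perm n L \<longleftrightarrow> bij_betw L {0..n} {1..Suc n}"
definition Vs :: "nat \<Rightarrow> nat \<Rightarrow> nat \<Rightarrow> (nat \<Rightarrow> nat) \<Rightarrow> bool" where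
  "Vs n p s L \<longleftrightarrow> (\<forall>k. s \<le> k \<and> k \<le> n \<longrightarrow> k + 1 \<le> L k + p \<and> L k + s + p \<le> n + k + 2)"
definition Good :: "nat \<Rightarrow> nat \<Rightarrow> nat \<Rightarrow> (nat \<Rightarrow> nat) \<Rightarrow> bool" where
  "Good n p s L \<longleftrightarrow> (\<forall>k<s. L k = k + 1) \<and> Vs n p s L"

lemma Perm_inj: "Perm n L \<Longrightarrow> j \<le> n \<Longrightarrow> k \<le> n \<Longrightarrow> L j = L k \<Longrightarrow> j = k"
  unfolding Perm_def bij_betw_def inj_on_def by auto
lemma Perm_rng: "Perm n L \<Longrightarrow> k \<le> n \<Longrightarrow> 1 \<le> L k \<and> L k \<le> Suc n"
  unfolding Perm_def bij_betw_def by auto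
lemma Perm_surj: "Perm n L \<Longrightarrow> 1 \<le> v \<Longrightarrow> v \<le> Suc n \<Longrightarrow> \<exists>j\<le>n. L j = v"
  unfolding Perm_def bij_betw_def by (metis atLeastAtMost_iff imageE)

lemma cmp_eq: "cmp k L = (if L (Suc k) < L k then L \<circ> transpose k (Suc k) else L)"
  by (auto simp: cmp_def fun_eq_iff transpose_def)

lemma cmp_Perm: "Perm n L \<Longrightarrow> Suc k \<le> n \<Longrightarrow> Perm n (cmp k L)"
proof -
  assume P: "Perm n L" and k: "Suc k \<le> n"
  have "bij_betw (transpose k (Suc k)) {0..n} {0..n}"
    using k by (intro permutes_imp_bij permutes_swap_id) auto
  then have "bij_betw (L \<circ> transpose k (Suc k)) {0..n} {1..Suc n}"
    using P unfolding Perm_def by (rule bij_betw_trans)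
  then show ?thesis using P unfolding cmp_eq Perm_def by auto
qed

lemma pass_Perm: "Perm n L \<Longrightarrow> s + q \<le> n \<Longrightarrow> Perm n (pass s q L)"
proof (induction q arbitrary: L)
  case 0 then show ?case by simp
next
  case (Suc q)
  then show ?case using cmp_Perm[of n L "s+q"] by simp
qed

lemma low_vals:
  assumes P: "Perm n L" and pre: "\<forall>j<s. L j = j + 1" and k: "s \<le> k" "k \<le> n"
  shows "s + 1 \<le> L k"
proof (rule ccontr)
  assume "\<not> s + 1 \<le> L k"
  then have lk: "L k \<le> s" by simp
  have "1 \<le> L k" using Perm_rng[OF P k(2)] by simp
  then have "L (L k - 1) = L k" using pre lk by simp
  then have "L k - 1 = k" using Perm_inj[OF P, of "L k - 1" k] lk k by simp
  then show False using lk k \<open>1 \<le> L k\<close> by simp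
qed

lemma PH:
  assumes P: "Perm n L" and pre: "\<forall>j<s. L j = j + 1" and k: "s \<le> k" "k \<le> s + p" and sp: "s + p \<le> n"
  shows "Min (L ` {k..s+p}) + s + p \<le> n + k + 1"
proof (rule ccontr)
  let ?c = "Min (L ` {k..s+p})"
  assume c: "\<not> ?c + s + p \<le> n + k + 1"
  have cin: "?c \<in> L ` {k..s+p}" using k by (intro Min_in) auto
  then have cle: "?c \<le> Suc n" using Perm_rng[OF P] sp by auto
  have sub: "{s+1..<?c} \<subseteq> L ` ({s..<k} \<union> {s+p+1..n})"
  proof
    fix v assume v: "v \<in> {s+1..<?c}"
    then obtain j where j: "j \<le> n" "L j = v" using Perm_surj[OF P, of v] cle by auto
    have "s \<le> j"
    proof (rule ccontr)
      assume "\<not> s \<le> j" then have "L j = j + 1" using pre by simp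
      then show False using v j \<open>\<not> s \<le> j\<close> by simp
    qed
    moreover have "\<not> (k \<le> j \<and> j \<le> s + p)"
    proof
      assume "k \<le> j \<and> j \<le> s + p"
      then have "?c \<le> L j" by (intro Min_le) auto
      then show False using v j by simp
    qed
    ultimately show "v \<in> L ` ({s..<k} \<union> {s+p+1..n})" using j by force
  qed
  have "card {s+1..<?c} \<le> card (L ` ({s..<k} \<union> {s+p+1..n}))" by (rule card_mono[OF _ sub]) auto
  also have "\<dots> \<le> card ({s..<k} \<union> {s+p+1..n})" by (rule card_image_le) auto
  also have "\<dots> \<le> card {s..<k} + card {s+p+1..n}" by (rule card_Un_le)
  finally have "?c - (s+1) \<le> (k - s) + (n + 1 - (s + p + 1))" by simp
  then show False using c k sp by linarith
qed

lemma VsD: "Vs n p s L \<Longrightarrow> s \<le> k \<Longrightarrow> k \<le> n \<Longrightarrow> k + 1 \<le> L k + p \<and> L k + s + p \<le> n + k + 2"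
  unfolding Vs_def by blast

lemma block:
  assumes P: "Perm n L" and p: "1 \<le> p" and sp: "s + p \<le> n"
  shows "Good n p s L \<longleftrightarrow> Good n p (Suc s) (pass s p L)"
proof
  let ?B = "pass s p L"
  have Bout: "?B k = L k" if "k < s \<or> s + p < k" for k using that by (simp add: pass_formula)
  have Bs: "?B s = Min (L ` {s..s+p})" by (simp add: pass_formula)
  have Bin: "?B k = max (L (k-1)) (Min (L ` {k..s+p}))" if "s < k" "k \<le> s + p" for k
    using that by (simp add: pass_formula)
  assume G: "Good n p s L"
  then have pre: "\<forall>j<s. L j = j + 1" and V: "Vs n p s L" by (auto simp: Good_def)
  have lv: "\<And>k. s \<le> k \<Longrightarrow> k \<le> n \<Longrightarrow> s + 1 \<le> L k" using low_vals[OF P pre] by blast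
  have pre': "\<forall>k<Suc s. ?B k = k + 1"
  proof (intro allI impI)
    fix k assume "k < Suc s"
    show "?B k = k + 1"
    proof (cases "k < s")
      case True then show ?thesis using Bout pre by simp
    next
      case False
      then have ks: "k = s" using \<open>k < Suc s\<close> by simp
      obtain j where j: "j \<le> n" "L j = s + 1" using Perm_surj[OF P, of "s+1"] sp by auto
      have sj: "s \<le> j"
      proof (rule ccontr)
        assume "\<not> s \<le> j" then have "L j = j + 1" using pre by simp
        then show False using j \<open>\<not> s \<le> j\<close> by simp
      qed
      have "j + 1 \<le> L j + p" using VsD[OF V sj j(1)] by simp
      then have "j \<le> s + p" using j by simp
      then have "s + 1 \<in> L ` {s..s+p}" using j sj by force
      then have "Min (L ` {s..s+p}) \<le> s + 1" by (intro Min_le) auto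
      moreover have "s + 1 \<le> Min (L ` {s..s+p})"
      proof -
        have "\<forall>x\<in>L ` {s..s+p}. s + 1 \<le> x" using lv sp by auto
        then show ?thesis by (subst Min_ge_iff) auto
      qed
      ultimately have "Min (L ` {s..s+p}) = s + 1" by (rule antisym)
      then show ?thesis using Bs ks by simp
    qed
  qed
  have "Vs n p (Suc s) ?B"
    unfolding Vs_def
  proof (intro allI impI)
    fix k assume k: "Suc s \<le> k \<and> k \<le> n"
    show "k + 1 \<le> ?B k + p \<and> ?B k + Suc s + p \<le> n + k + 2"
    proof (cases "s + p < k")
      case True
      have "k + 1 \<le> L k + p \<and> L k + s + p \<le> n + k + 2" using VsD[OF V, of k] k by simp
      moreover have "L k \<le> Suc n" using Perm_rng[OF P, of k] k by simp
      ultimately show ?thesis using Bout[of k] True by simp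
    next
      case False
      then have kk: "s < k" "k \<le> s + p" using k by auto
      have l1: "s + 1 \<le> L (k-1)" using lv kk sp by auto
      have l2: "L (k-1) + s + p \<le> n + (k-1) + 2" using VsD[OF V, of "k-1"] kk sp by simp
      have l3: "Min (L ` {k..s+p}) + s + p \<le> n + k + 1" using PH[OF P pre, of k p] kk sp by simp
      have b1: "L (k-1) \<le> ?B k" using Bin[OF kk] by simp
      have b2: "?B k + Suc s + p \<le> n + k + 2" unfolding Bin[OF kk] using l2 l3 kk by auto
      show ?thesis using b1 b2 l1 kk by simp
    qed
  qed
  then show "Good n p (Suc s) ?B" using pre' by (simp add: Good_def)
next
  let ?B = "pass s p L"
  have Bout: "?B k = L k" if "k < s \<or> s + p < k" for k using that by (simp add: pass_formula)
  have Bin: "?B k = max (L (k-1)) (Min (L ` {k..s+p}))" if "s < k" "k \<le> s + p" for k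
    using that by (simp add: pass_formula)
  assume G: "Good n p (Suc s) ?B"
  then have preB: "\<forall>j<Suc s. ?B j = j + 1" and V: "Vs n p (Suc s) ?B" by (auto simp: Good_def)
  have pre: "\<forall>j<s. L j = j + 1"
  proof (intro allI impI)
    fix j assume "j < s" then show "L j = j + 1" using preB Bout[of j] by simp
  qed
  have lv: "\<And>k. s \<le> k \<Longrightarrow> k \<le> n \<Longrightarrow> s + 1 \<le> L k" using low_vals[OF P pre] by blast
  have "Vs n p s L"
    unfolding Vs_def
  proof (intro allI impI)
    fix k assume k: "s \<le> k \<and> k \<le> n"
    show "k + 1 \<le> L k + p \<and> L k + s + p \<le> n + k + 2"
    proof (cases "s + p < k")
      case True
      have "k + 1 \<le> ?B k + p \<and> ?B k + Suc s + p \<le> n + k + 2" using VsD[OF V, of k] k True by simp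
      then show ?thesis using Bout[of k] True by simp
    next
      case False
      have l1: "s + 1 \<le> L k" using lv k by auto
      show ?thesis
      proof (cases "k = s + p")
        case True then show ?thesis using l1 Perm_rng[OF P, of k] k by simp
      next
        case False2: False
        then have kk: "s < k + 1" "k + 1 \<le> s + p" using False k by auto
        have "L k \<le> ?B (k+1)" using Bin[OF kk] by simp
        moreover have "?B (k+1) + Suc s + p \<le> n + (k+1) + 2" using VsD[OF V, of "k+1"] kk sp by simp
        ultimately show ?thesis using l1 kk by simp
      qed
    qed
  qed
  then show "Good n p s L" using pre by (simp add: Good_def)
qed


lemma net_Perm: "Perm n L \<Longrightarrow> s + j + p \<le> n + 1 \<Longrightarrow> 1 \<le> p \<Longrightarrow> Perm n (net p s j L)"
proof (induction j arbitrary: s L)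
  case 0 then show ?case by simp
next
  case (Suc j)
  have "Perm n (pass s p L)" using pass_Perm[OF Suc.prems(1)] Suc.prems by simp
  then show ?case using Suc by simp
qed

lemma net_good: "Perm n L \<Longrightarrow> 1 \<le> p \<Longrightarrow> s + j + p \<le> n + 1 \<Longrightarrow>
  Good n p s L \<longleftrightarrow> Good n p (s + j) (net p s j L)"
proof (induction j arbitrary: s L)
  case 0 then show ?case by simp
next
  case (Suc j)
  have P': "Perm n (pass s p L)" using pass_Perm[OF Suc.prems(1)] Suc.prems by simp
  have "Good n p s L \<longleftrightarrow> Good n p (Suc s) (pass s p L)" using block[OF Suc.prems(1,2)] Suc.prems by simp
  also have "\<dots> \<longleftrightarrow> Good n p (Suc s + j) (net p (Suc s) j (pass s p L))"
    using Suc.IH[OF P' Suc.prems(2)] Suc.prems by simp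
  finally show ?case by simp
qed

lemma final_good:
  assumes P: "Perm n L" and p: "1 \<le> p" "p \<le> n"
  shows "Good n p (n + 1 - p) L \<longleftrightarrow> (\<forall>k\<le>n. L k = k + 1)"
proof
  assume G: "Good n p (n + 1 - p) L"
  then have pre: "\<forall>k<n+1-p. L k = k + 1" and V: "Vs n p (n+1-p) L" by (auto simp: Good_def)
  show "\<forall>k\<le>n. L k = k + 1"
  proof (intro allI impI)
    fix k assume "k \<le> n"
    then show "L k = k + 1"
    proof (induction k rule: less_induct)
      case (less k)
      show ?case
      proof (cases "k < n + 1 - p")
        case True then show ?thesis using pre by simp
      next
        case False
        have "L k + (n + 1 - p) + p \<le> n + k + 2" using VsD[OF V, of k] False less.prems by simp
        then have up: "L k \<le> k + 1" using p by simp
        have lo: "1 \<le> L k" using Perm_rng[OF P less.prems] by simp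
        have ne: "L k \<noteq> j + 1" if "j < k" for j
        proof
          assume "L k = j + 1"
          moreover have "L j = j + 1" using less.IH[of j] that less.prems by simp
          ultimately have "j = k" using Perm_inj[OF P, of j k] that less.prems by simp
          then show False using that by simp
        qed
        show ?thesis
        proof (rule ccontr)
          assume "L k \<noteq> k + 1"
          then have "L k - 1 < k" using up lo by simp
          then have "L k \<noteq> (L k - 1) + 1" using ne by blast
          then show False using lo by simp
        qed
      qed
    qed
  qed
next
  assume h: "\<forall>k\<le>n. L k = k + 1"
  then show "Good n p (n + 1 - p) L" using p by (auto simp: Good_def Vs_def)
qed

lemma net_sorted_iff:
  assumes P: "Perm n L" and p: "1 \<le> p" "p \<le> n"
  shows "Vs n p 0 L \<longleftrightarrow> (\<forall>k\<le>n. net p 0 (n + 1 - p) L k = k + 1)"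
proof -
  have "Vs n p 0 L \<longleftrightarrow> Good n p 0 L" by (simp add: Good_def)
  also have "\<dots> \<longleftrightarrow> Good n p (0 + (n + 1 - p)) (net p 0 (n + 1 - p) L)"
    using net_good[OF P p(1), of 0 "n+1-p"] p by simp
  also have "\<dots> \<longleftrightarrow> (\<forall>k\<le>n. net p 0 (n + 1 - p) L k = k + 1)"
    using final_good[OF net_Perm[OF P _ p(1)] p, of 0 "n+1-p"] p by simp
  finally show ?thesis .
qed

definition conf :: "nat \<Rightarrow> (nat \<Rightarrow> nat) \<Rightarrow> (nat \<Rightarrow> int) \<Rightarrow> config" where
  "conf n L P = (\<lambda>i. {x. \<exists>k\<le>n. P k = i \<and> L k = x})"

lemma step_gen:
  fixes L L' :: "nat \<Rightarrow> nat" and P P' :: "nat \<Rightarrow> int"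
  assumes ab: "a \<le> n" "b \<le> n" "a \<noteq> b"
    and Pa: "P a = i" "P b = i"
    and oth: "\<And>k. k \<le> n \<Longrightarrow> k \<noteq> a \<Longrightarrow> k \<noteq> b \<Longrightarrow> P k \<noteq> i \<and> P' k = P k \<and> L' k = L k"
    and P'ab: "P' a = i - 1" "P' b = i + 1"
    and L'ab: "L' a = min (L a) (L b)" "L' b = max (L a) (L b)"
    and ne: "L a \<noteq> L b"
  shows "topple_step (conf n L P) (conf n L' P')"
proof -
  let ?\<alpha> = "min (L a) (L b)" and ?\<beta> = "max (L a) (L b)"
  let ?c = "conf n L P" and ?c' = "conf n L' P'"
  define A where "A j = {x. \<exists>k\<le>n. k \<noteq> a \<and> k \<noteq> b \<and> P k = j \<and> L k = x}" for j
  have mc: "?c j = A j \<union> (if j = i then {L a, L b} else {})" for j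
  proof (intro set_eqI iffI)
    fix x assume "x \<in> ?c j"
    then obtain k where k: "k \<le> n" "P k = j" "L k = x" by (auto simp: conf_def)
    then show "x \<in> A j \<union> (if j = i then {L a, L b} else {})"
      using Pa by (cases "k = a \<or> k = b") (auto simp: A_def)
  next
    fix x assume "x \<in> A j \<union> (if j = i then {L a, L b} else {})"
    then show "x \<in> ?c j" using ab Pa by (auto simp: A_def conf_def split: if_splits)
  qed
  have mc': "?c' j = A j \<union> (if j = i - 1 then {?\<alpha>} else {}) \<union> (if j = i + 1 then {?\<beta>} else {})" for j
  proof (intro set_eqI iffI)
    fix x assume "x \<in> ?c' j"
    then obtain k where k: "k \<le> n" "P' k = j" "L' k = x" by (auto simp: conf_def)
    show "x \<in> A j \<union> (if j = i - 1 then {?\<alpha>} else {}) \<union> (if j = i + 1 then {?\<beta>} else {})"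
    proof (cases "k = a")
      case True then have "j = i - 1" "x = ?\<alpha>" using k P'ab L'ab by auto
      then show ?thesis by simp
    next
      case F1: False
      show ?thesis
      proof (cases "k = b")
        case True then have "j = i + 1" "x = ?\<beta>" using k P'ab L'ab by auto
        then show ?thesis by simp
      next
        case False
        then have "P k = j" "L k = x" using k oth[of k] F1 by auto
        then have "x \<in> A j" using k F1 False unfolding A_def by blast
        then show ?thesis by simp
      qed
    qed
  next
    fix x assume x: "x \<in> A j \<union> (if j = i - 1 then {?\<alpha>} else {}) \<union> (if j = i + 1 then {?\<beta>} else {})"
    show "x \<in> ?c' j"
    proof (cases "x \<in> A j")
      case True
      then obtain k where k: "k \<le> n" "k \<noteq> a" "k \<noteq> b" "P k = j" "L k = x" unfolding A_def by blast
      then have "P' k = j" "L' k = x" using oth[of k] by auto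
      then show ?thesis using k(1) unfolding conf_def by blast
    next
      case False
      then have "(j = i - 1 \<and> x = ?\<alpha>) \<or> (j = i + 1 \<and> x = ?\<beta>)" using x by (auto split: if_splits)
      then show ?thesis
      proof
        assume h: "j = i - 1 \<and> x = ?\<alpha>"
        then have "P' a = j" "L' a = x" using P'ab L'ab by auto
        then show ?thesis using ab(1) unfolding conf_def by blast
      next
        assume h: "j = i + 1 \<and> x = ?\<beta>"
        then have "P' b = j" "L' b = x" using P'ab L'ab by auto
        then show ?thesis using ab(2) unfolding conf_def by blast
      qed
    qed
  qed
  have Ai: "A i = {}" using oth by (auto simp: A_def)
  have "?c' = (\<lambda>j. if j = i then ?c i - {?\<alpha>, ?\<beta>}
               else if j = i - 1 then ?c j \<union> {?\<alpha>}
               else if j = i + 1 then ?c j \<union> {?\<beta>}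
               else ?c j)"
  proof
    fix j
    show "?c' j = (if j = i then ?c i - {?\<alpha>, ?\<beta>}
               else if j = i - 1 then ?c j \<union> {?\<alpha>}
               else if j = i + 1 then ?c j \<union> {?\<beta>}
               else ?c j)"
      unfolding mc mc' using Ai by (auto simp: min_def max_def)
  qed
  moreover have "?\<alpha> \<in> ?c i" "?\<beta> \<in> ?c i" unfolding mc by (auto simp: min_def max_def)
  moreover have "?\<alpha> < ?\<beta>" using ne by (auto simp: min_def max_def)
  ultimately show ?thesis unfolding topple_step_def by blast
qed


definition Ps :: "nat \<Rightarrow> nat \<Rightarrow> nat \<Rightarrow> nat \<Rightarrow> int" where
  "Ps p s q k = (if k < s then int k else int k + 1 - (if k = s + q then 1 else 0) - (if s + p < k then 1 else 0))"

lemma block_step: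
  assumes P: "Perm n L" and q: "q < p" and sp: "s + p \<le> n"
  shows "topple_step (conf n L (Ps p s (Suc q))) (conf n (cmp (s+q) L) (Ps p s q))"
proof (rule step_gen[where a = "s+q" and b = "Suc (s+q)" and i = "int (s+q+1)"])
  show "s + q \<le> n" "Suc (s + q) \<le> n" "s + q \<noteq> Suc (s + q)" using q sp by auto
  show "Ps p s (Suc q) (s + q) = int (s + q + 1)" "Ps p s (Suc q) (Suc (s + q)) = int (s + q + 1)"
    using q by (auto simp: Ps_def)
  show "Ps p s q (s + q) = int (s + q + 1) - 1" "Ps p s q (Suc (s + q)) = int (s + q + 1) + 1"
    using q by (auto simp: Ps_def)
  show "cmp (s + q) L (s + q) = min (L (s + q)) (L (Suc (s + q)))" by (rule cmp_lo)
  show "cmp (s + q) L (Suc (s + q)) = max (L (s + q)) (L (Suc (s + q)))" by (rule cmp_hi)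
  show "L (s + q) \<noteq> L (Suc (s + q))" using Perm_inj[OF P, of "s+q" "Suc (s+q)"] q sp by auto
  fix k assume k: "k \<le> n" "k \<noteq> s + q" "k \<noteq> Suc (s + q)"
  show "Ps p s (Suc q) k \<noteq> int (s + q + 1) \<and> Ps p s q k = Ps p s (Suc q) k \<and> cmp (s + q) L k = L k"
    using k q by (auto simp: Ps_def cmp_other)
qed

lemma block_chain:
  assumes P: "Perm n L" and q: "q \<le> p" and sp: "s + p \<le> n"
  shows "topple_step\<^sup>*\<^sup>* (conf n L (Ps p s q)) (conf n (pass s q L) (Ps p s 0))"
  using P q
proof (induction q arbitrary: L)
  case 0 then show ?case by simp
next
  case (Suc q)
  have "topple_step (conf n L (Ps p s (Suc q))) (conf n (cmp (s+q) L) (Ps p s q))"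
    using block_step[OF Suc.prems(1) _ sp] Suc.prems by simp
  moreover have "topple_step\<^sup>*\<^sup>* (conf n (cmp (s+q) L) (Ps p s q)) (conf n (pass s q (cmp (s+q) L)) (Ps p s 0))"
    using Suc.IH[OF cmp_Perm[OF Suc.prems(1)]] Suc.prems sp by simp
  ultimately show ?case by (simp add: converse_rtranclp_into_rtranclp)
qed

lemma Ps_shift: "Ps p s 0 = Ps p (Suc s) p"
  by (rule ext) (auto simp: Ps_def)

lemma net_chain:
  assumes P: "Perm n L" and p: "1 \<le> p" and sj: "s + j + p \<le> n + 1"
  shows "topple_step\<^sup>*\<^sup>* (conf n L (Ps p s p)) (conf n (net p s j L) (Ps p (s + j) p))"
  using P sj
proof (induction j arbitrary: s L)
  case 0 then show ?case by simp
next
  case (Suc j)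
  have "topple_step\<^sup>*\<^sup>* (conf n L (Ps p s p)) (conf n (pass s p L) (Ps p (Suc s) p))"
    using block_chain[OF Suc.prems(1), of p p s] Suc.prems Ps_shift by simp
  moreover have "topple_step\<^sup>*\<^sup>* (conf n (pass s p L) (Ps p (Suc s) p)) (conf n (net p (Suc s) j (pass s p L)) (Ps p (Suc s + j) p))"
  proof -
    have "s + p \<le> n" using Suc.prems by simp
    then have "Perm n (pass s p L)" by (rule pass_Perm[OF Suc.prems(1)])
    then show ?thesis using Suc.IH[of "pass s p L" "Suc s"] Suc.prems by simp
  qed
  ultimately show ?case by simp
qed


lemma upto_int_upt: "[int a..int b] = map int [a..<Suc b]"
proof (induction b)
  case 0 then show ?case by (cases a) (auto simp: upto.simps)
next
  case (Suc b)
  show ?case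
  proof (cases "a \<le> Suc b")
    case True
    have "[int a..int (Suc b)] = [int a..int (Suc b) - 1] @ [int (Suc b)]"
      using True by (intro upto_rec2) auto
    also have "int (Suc b) - 1 = int b" by simp
    finally show ?thesis using Suc True by simp
  next
    case False then show ?thesis by (auto simp: upto.simps)
  qed
qed

lemma concat_hole:
  "h \<le> m \<Longrightarrow> concat (map (\<lambda>j. if j < h then [L j] else if j = h then [] else [L (j - 1)]) [0..<Suc m]) = map L [0..<m]"
proof (induction m)
  case 0 then show ?case by simp
next
  case (Suc m)
  show ?case
  proof (cases "h \<le> m")
    case True
    then show ?thesis using Suc by simp
  next
    case False
    then have hm: "h = Suc m" using Suc.prems by simp
    let ?f = "\<lambda>j. if j < h then [L j] else if j = h then [] else [L (j - 1)]"
    have e1: "map ?f [0..<Suc m] = map (\<lambda>j. [L j]) [0..<Suc m]" using hm by (intro map_cong) auto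
    have "concat (map ?f [0..<Suc (Suc m)]) = concat (map ?f [0..<Suc m] @ [?f (Suc m)])" by simp
    also have "\<dots> = concat (map ?f [0..<Suc m])" using hm by simp
    also have "\<dots> = map L [0..<Suc m]" unfolding e1 by (rule concat_map_singleton)
    finally show ?thesis .
  qed
qed

lemma conf_final:
  assumes p: "1 \<le> p" "p \<le> n"
  shows "conf n L (Ps p (n + 1 - p) p) (int j) =
    (if j < n + 1 - p then {L j} else if j = n + 1 - p \<or> n + 1 < j then {} else {L (j - 1)})"
proof -
  have Pf: "Ps p (n + 1 - p) p k = (if k < n + 1 - p then int k else int k + 1)" if "k \<le> n" for k
    using that p by (auto simp: Ps_def)
  show ?thesis
  proof (intro set_eqI iffI)
    fix x assume "x \<in> conf n L (Ps p (n + 1 - p) p) (int j)"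
    then obtain k where k: "k \<le> n" "Ps p (n + 1 - p) p k = int j" "L k = x" by (auto simp: conf_def)
    show "x \<in> (if j < n + 1 - p then {L j} else if j = n + 1 - p \<or> n + 1 < j then {} else {L (j - 1)})"
    proof (cases "k < n + 1 - p")
      case True
      then have "j = k" using k Pf[OF k(1)] by simp
      then show ?thesis using k True by simp
    next
      case False
      then have "int j = int k + 1" using k Pf[OF k(1)] by simp
      then have "j = k + 1" by simp
      then show ?thesis using k False by auto
    qed
  next
    fix x assume x: "x \<in> (if j < n + 1 - p then {L j} else if j = n + 1 - p \<or> n + 1 < j then {} else {L (j - 1)})"
    show "x \<in> conf n L (Ps p (n + 1 - p) p) (int j)"
    proof (cases "j < n + 1 - p")
      case True
      then have "Ps p (n + 1 - p) p j = int j" "j \<le> n" using Pf[of j] by auto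
      then show ?thesis using x True unfolding conf_def by auto
    next
      case False
      then have j: "n + 1 - p < j" "j \<le> n + 1" "x = L (j - 1)" using x by (auto split: if_splits)
      then have "Ps p (n + 1 - p) p (j - 1) = int j" "j - 1 \<le> n" using Pf[of "j-1"] by auto
      then show ?thesis using j unfolding conf_def by blast
    qed
  qed
qed

lemma final_stable:
  assumes p: "1 \<le> p" "p \<le> n"
  shows "stable (conf n L (Ps p (n + 1 - p) p))"
  unfolding stable_def
proof
  fix i :: int
  show "card (conf n L (Ps p (n + 1 - p) p) i) \<le> 1 \<and> finite (conf n L (Ps p (n + 1 - p) p) i)"
  proof (cases "i < 0")
    case True
    then have "conf n L (Ps p (n + 1 - p) p) i = {}" by (auto simp: conf_def Ps_def)
    then show ?thesis by simp
  next
    case False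
    then obtain j where "i = int j" by (metis nonneg_eq_int not_less)
    then show ?thesis using conf_final[OF p, of L j] by auto
  qed
qed

lemma final_read:
  assumes p: "1 \<le> p" "p \<le> n"
  shows "read_config n (conf n L (Ps p (n + 1 - p) p)) = map L [0..<Suc n]"
proof -
  have "read_config n (conf n L (Ps p (n + 1 - p) p))
      = concat (map (\<lambda>j. sorted_list_of_set (conf n L (Ps p (n + 1 - p) p) (int j))) [0..<Suc (Suc n)])"
  proof -
    have "[0..int n + 1] = map int [0..<Suc (Suc n)]" using upto_int_upt[of 0 "Suc n"] by (simp add: add.commute)
    then show ?thesis unfolding read_config_def by (simp only: map_map comp_def)
  qed
  also have "\<dots> = concat (map (\<lambda>j. if j < n + 1 - p then [L j] else if j = n + 1 - p then [] else [L (j - 1)]) [0..<Suc (Suc n)])"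
  proof -
    have pt: "sorted_list_of_set (conf n L (Ps p (n + 1 - p) p) (int j)) = (if j < n + 1 - p then [L j] else if j = n + 1 - p then [] else [L (j - 1)])"
      if "j \<le> Suc n" for j using conf_final[OF p, of L j] that by auto
    show ?thesis
      apply (intro arg_cong[where f = concat] map_cong refl)
      apply (rule pt)
      by auto
  qed
  also have "\<dots> = map L [0..<Suc n]" using concat_hole[of "n + 1 - p" "Suc n" L] p by simp
  finally show ?thesis .
qed

definition fire :: "config \<Rightarrow> int \<Rightarrow> nat \<Rightarrow> nat \<Rightarrow> config" where
  "fire c i \<alpha> \<beta> = (\<lambda>j. if j = i then c i - {\<alpha>, \<beta>}
               else if j = i - 1 then c j \<union> {\<alpha>}
               else if j = i + 1 then c j \<union> {\<beta>}
               else c j)"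

lemma step_fire: "topple_step c c' \<longleftrightarrow> (\<exists>i \<alpha> \<beta>. \<alpha> \<in> c i \<and> \<beta> \<in> c i \<and> \<alpha> < \<beta> \<and> c' = fire c i \<alpha> \<beta>)"
  unfolding topple_step_def fire_def by simp

definition Inv :: "config \<Rightarrow> bool" where
  "Inv c \<longleftrightarrow> (\<forall>i. finite (c i) \<and> card (c i) \<le> 2) \<and>
     (\<forall>i j. i < j \<and> card (c i) = 2 \<and> card (c j) = 2 \<longrightarrow> (\<exists>k. i < k \<and> k < j \<and> c k = {}))"

lemma card2_eq:
  assumes "finite A" "card A \<le> 2" "\<alpha> \<in> A" "\<beta> \<in> A" "\<alpha> \<noteq> \<beta>"
  shows "A = {\<alpha>, \<beta>}"
proof -
  have "{\<alpha>, \<beta>} \<subseteq> A" using assms by auto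
  moreover have "card {\<alpha>, \<beta>} = 2" using assms by simp
  ultimately show ?thesis using assms card_subset_eq by (metis le_antisym card_mono)
qed

lemma fire_other: "k \<noteq> i \<Longrightarrow> k \<noteq> i - 1 \<Longrightarrow> k \<noteq> i + 1 \<Longrightarrow> fire c i \<alpha> \<beta> k = c k"
  by (simp add: fire_def)

lemma Inv_step:
  assumes I: "Inv c" and st: "topple_step c c'"
  shows "Inv c'"
proof -
  obtain i \<alpha> \<beta> where ab: "\<alpha> \<in> c i" "\<beta> \<in> c i" "\<alpha> < \<beta>" and c': "c' = fire c i \<alpha> \<beta>"
    using st by (auto simp: step_fire)
  have fin: "\<And>j. finite (c j)" and le2: "\<And>j. card (c j) \<le> 2" using I by (auto simp: Inv_def)
  have btw: "\<And>x y. x < y \<Longrightarrow> card (c x) = 2 \<Longrightarrow> card (c y) = 2 \<Longrightarrow> \<exists>k. x < k \<and> k < y \<and> c k = {}"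
    using I unfolding Inv_def by blast
  have ci: "c i = {\<alpha>, \<beta>}" using card2_eq[OF fin le2 ab(1,2)] ab(3) by simp
  then have ci2: "card (c i) = 2" using ab(3) by simp
  have c'i: "c' i = {}" using ci by (simp add: c' fire_def)
  have lm: "card (c (i - 1)) \<le> 1"
  proof (rule ccontr)
    assume "\<not> card (c (i - 1)) \<le> 1"
    then have "card (c (i - 1)) = 2" using le2[of "i-1"] by simp
    then obtain k where "i - 1 < k" "k < i" using btw[of "i-1" i] ci2 by auto
    then show False by simp
  qed
  have lp: "card (c (i + 1)) \<le> 1"
  proof (rule ccontr)
    assume "\<not> card (c (i + 1)) \<le> 1"
    then have "card (c (i + 1)) = 2" using le2[of "i+1"] by simp
    then obtain k where "i < k" "k < i + 1" using btw[of i "i+1"] ci2 by auto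
    then show False by simp
  qed
  have c'm: "c' (i - 1) = c (i - 1) \<union> {\<alpha>}" and c'p: "c' (i + 1) = c (i + 1) \<union> {\<beta>}"
    by (simp_all add: c' fire_def)
  have c'o: "\<And>k. k \<noteq> i \<Longrightarrow> k \<noteq> i - 1 \<Longrightarrow> k \<noteq> i + 1 \<Longrightarrow> c' k = c k"
    by (simp add: c' fire_other)
  have fin': "finite (c' j) \<and> card (c' j) \<le> 2" for j
  proof -
    consider "j = i" | "j = i - 1" | "j = i + 1" | "j \<noteq> i \<and> j \<noteq> i - 1 \<and> j \<noteq> i + 1" by blast
    then show ?thesis
    proof cases
      case 1 then show ?thesis using c'i by simp
    next
      case 2
      have "card (c (i - 1) \<union> {\<alpha>}) \<le> card (c (i - 1)) + card {\<alpha>}" by (rule card_Un_le)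
      then show ?thesis using 2 c'm lm fin by simp
    next
      case 3
      have "card (c (i + 1) \<union> {\<beta>}) \<le> card (c (i + 1)) + card {\<beta>}" by (rule card_Un_le)
      then show ?thesis using 3 c'p lp fin by simp
    next
      case 4 then show ?thesis using c'o fin le2 by simp
    qed
  qed
  have m_not: "c (i - 1) \<noteq> {}" if "card (c' (i - 1)) = 2"
    using that c'm by auto
  have p_not: "c (i + 1) \<noteq> {}" if "card (c' (i + 1)) = 2"
    using that c'p by auto
  have btw': "\<exists>k. x < k \<and> k < y \<and> c' k = {}" if xy: "x < y" "card (c' x) = 2" "card (c' y) = 2" for x y
  proof -
    have xi: "x \<noteq> i" "y \<noteq> i" using xy c'i by auto
    consider "x < i \<and> i < y" | "y < i" | "i < x" using xi xy(1) by linarith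
    then show ?thesis
    proof cases
      case 1 then show ?thesis using c'i by blast
    next
      case 2
      show ?thesis
      proof (cases "y = i - 1")
        case True
        then have "x < i - 1" using xy by simp
        then have cx: "card (c x) = 2" using xy c'o[of x] by simp
        obtain k where k: "x < k" "k < i" "c k = {}" using btw[OF _ cx ci2] \<open>x < i - 1\<close> by auto
        have "k \<noteq> i - 1" using k m_not xy True by auto
        then have "k < y" "c' k = {}" using k True c'o[of k] by auto
        then show ?thesis using k by blast
      next
        case False
        then have "y < i - 1" using 2 by simp
        then have cx: "card (c x) = 2" and cy: "card (c y) = 2" using xy c'o[of x] c'o[of y] by auto
        obtain k where k: "x < k" "k < y" "c k = {}" using btw[OF xy(1) cx cy] by auto
        then have "c' k = {}" using c'o[of k] \<open>y < i - 1\<close> by simp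
        then show ?thesis using k by blast
      qed
    next
      case 3
      show ?thesis
      proof (cases "x = i + 1")
        case True
        then have "i + 1 < y" using xy by simp
        then have cy: "card (c y) = 2" using xy c'o[of y] by simp
        obtain k where k: "i < k" "k < y" "c k = {}" using btw[OF _ ci2 cy] \<open>i + 1 < y\<close> by auto
        have "k \<noteq> i + 1" using k p_not xy True by auto
        then have "x < k" "c' k = {}" using k True c'o[of k] by auto
        then show ?thesis using k by blast
      next
        case False
        then have "i + 1 < x" using 3 by simp
        then have cx: "card (c x) = 2" and cy: "card (c y) = 2" using xy c'o[of x] c'o[of y] by auto
        obtain k where k: "x < k" "k < y" "c k = {}" using btw[OF xy(1) cx cy] by auto
        then have "c' k = {}" using c'o[of k] \<open>i + 1 < x\<close> by simp
        then show ?thesis using k by blast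
      qed
    qed
  qed
  show ?thesis unfolding Inv_def using fin' btw' by blast
qed

lemma Inv_steps: "topple_step\<^sup>*\<^sup>* c d \<Longrightarrow> Inv c \<Longrightarrow> Inv d"
  by (induction rule: rtranclp_induct) (auto intro: Inv_step)


lemma diamond:
  assumes I: "Inv c" and s1: "topple_step c c1" and s2: "topple_step c c2"
  shows "c1 = c2 \<or> (\<exists>d. topple_step c1 d \<and> topple_step c2 d)"
proof -
  obtain i \<alpha> \<beta> where ab: "\<alpha> \<in> c i" "\<beta> \<in> c i" "\<alpha> < \<beta>" and c1: "c1 = fire c i \<alpha> \<beta>"
    using s1 by (auto simp: step_fire)
  obtain j \<gamma> \<delta> where gd: "\<gamma> \<in> c j" "\<delta> \<in> c j" "\<gamma> < \<delta>" and c2: "c2 = fire c j \<gamma> \<delta>"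
    using s2 by (auto simp: step_fire)
  have fin: "\<And>j. finite (c j)" and le2: "\<And>j. card (c j) \<le> 2" using I by (auto simp: Inv_def)
  have btw: "\<And>x y. x < y \<Longrightarrow> card (c x) = 2 \<Longrightarrow> card (c y) = 2 \<Longrightarrow> \<exists>k. x < k \<and> k < y \<and> c k = {}"
    using I unfolding Inv_def by blast
  have ci: "c i = {\<alpha>, \<beta>}" using card2_eq[OF fin le2 ab(1,2)] ab(3) by simp
  have cj: "c j = {\<gamma>, \<delta>}" using card2_eq[OF fin le2 gd(1,2)] gd(3) by simp
  show ?thesis
  proof (cases "i = j")
    case True
    then have "\<alpha> = \<gamma> \<and> \<beta> = \<delta>" using ci cj ab(3) gd(3) by (auto simp: doubleton_eq_iff)
    then show ?thesis using c1 c2 True by simp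
  next
    case False
    have ci2: "card (c i) = 2" "card (c j) = 2" using ci cj ab(3) gd(3) by auto
    have far: "i + 1 < j \<or> j + 1 < i"
    proof (cases "i < j")
      case True
      obtain k where "i < k" "k < j" using btw[OF True ci2] by auto
      then show ?thesis by simp
    next
      case False
      then have "j < i" using \<open>i \<noteq> j\<close> by simp
      obtain k where "j < k" "k < i" using btw[OF \<open>j < i\<close> ci2(2) ci2(1)] by auto
      then show ?thesis by simp
    qed
    have c1j: "c1 j = c j" using far c1 by (auto simp: fire_def)
    have c2i: "c2 i = c i" using far c2 by (auto simp: fire_def)
    have "fire c1 j \<gamma> \<delta> = fire c2 i \<alpha> \<beta>"
    proof
      fix k
      show "fire c1 j \<gamma> \<delta> k = fire c2 i \<alpha> \<beta> k"
        unfolding c1 c2 fire_def using far by (auto simp: insert_commute)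
    qed
    moreover have "topple_step c1 (fire c1 j \<gamma> \<delta>)" using gd c1j by (auto simp: step_fire)
    moreover have "topple_step c2 (fire c2 i \<alpha> \<beta>)" using ab c2i by (auto simp: step_fire)
    ultimately show ?thesis by metis
  qed
qed

lemma strip:
  assumes I: "Inv c" and s: "topple_step c x" and st: "topple_step\<^sup>*\<^sup>* c y"
  shows "\<exists>z. topple_step\<^sup>*\<^sup>* x z \<and> (y = z \<or> topple_step y z)"
  using st
proof (induction rule: rtranclp_induct)
  case base then show ?case using s by blast
next
  case (step y y')
  obtain z where z: "topple_step\<^sup>*\<^sup>* x z" "y = z \<or> topple_step y z" using step.IH by blast
  have Iy: "Inv y" using Inv_steps[OF step.hyps(1) I] .
  show ?case
  proof (cases "y = z")
    case True
    then show ?thesis using z step.hyps(2) by (metis rtranclp.rtrancl_into_rtrancl)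
  next
    case False
    then have yz: "topple_step y z" using z by simp
    from diamond[OF Iy yz step.hyps(2)]
    show ?thesis
    proof
      assume "z = y'" then show ?thesis using z by blast
    next
      assume "\<exists>d. topple_step z d \<and> topple_step y' d"
      then obtain d where "topple_step z d" "topple_step y' d" by blast
      then show ?thesis using z by (metis rtranclp.rtrancl_into_rtrancl)
    qed
  qed
qed

lemma confl:
  assumes "topple_step\<^sup>*\<^sup>* c x"
  shows "Inv c \<Longrightarrow> topple_step\<^sup>*\<^sup>* c y \<Longrightarrow> \<exists>z. topple_step\<^sup>*\<^sup>* x z \<and> topple_step\<^sup>*\<^sup>* y z"
  using assms
proof (induction arbitrary: y rule: converse_rtranclp_induct)
  case base then show ?case by blast
next
  case (step c c')
  obtain z1 where z1: "topple_step\<^sup>*\<^sup>* c' z1" "y = z1 \<or> topple_step y z1"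
    using strip[OF step.prems(1) step.hyps(1) step.prems(2)] by blast
  have "Inv c'" using Inv_step[OF step.prems(1) step.hyps(1)] .
  then obtain z where "topple_step\<^sup>*\<^sup>* x z" "topple_step\<^sup>*\<^sup>* z1 z" using step.IH z1(1) by blast
  moreover have "topple_step\<^sup>*\<^sup>* y z1" using z1(2) by auto
  ultimately show ?case by (meson rtranclp_trans)
qed

lemma stable_nostep: "stable c \<Longrightarrow> \<not> topple_step c d"
proof
  assume st: "stable c" and "topple_step c d"
  then obtain i \<alpha> \<beta> where ab: "\<alpha> \<in> c i" "\<beta> \<in> c i" "\<alpha> < \<beta>" by (auto simp: step_fire)
  have "finite (c i)" "card (c i) \<le> 1" using st by (auto simp: stable_def)
  moreover have "card {\<alpha>, \<beta>} \<le> card (c i)" using ab calculation by (intro card_mono) auto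
  ultimately show False using ab(3) by simp
qed

lemma unique_nf:
  assumes "Inv c" "topple_step\<^sup>*\<^sup>* c x" "topple_step\<^sup>*\<^sup>* c y" "stable x" "stable y"
  shows "x = y"
proof -
  obtain z where z: "topple_step\<^sup>*\<^sup>* x z" "topple_step\<^sup>*\<^sup>* y z" using confl[OF assms(2,1,3)] by blast
  have "x = z" using z(1) stable_nostep[OF assms(4)] by (cases rule: converse_rtranclpE) auto
  moreover have "y = z" using z(2) stable_nostep[OF assms(5)] by (cases rule: converse_rtranclpE) auto
  ultimately show ?thesis by simp
qed

lemma ic_mem: "1 \<le> j \<Longrightarrow> j \<le> n \<Longrightarrow> sh r (\<pi> j) \<in> insert_config n \<pi> r p (int j)"
  by (simp add: insert_config_def sh_def)

lemma ic_mem2: "r \<in> insert_config n \<pi> r p (int p)"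
  by (simp add: insert_config_def)

lemma init_conf:
  assumes p: "1 \<le> p" "p \<le> n"
  shows "insert_config n \<pi> r p = conf n (\<lambda>k. ins (p+1) r \<pi> (Suc k)) (Ps p 0 p)"
proof (rule ext, rule set_eqI, rule iffI)
  fix i x
  let ?L = "\<lambda>k. ins (p+1) r \<pi> (Suc k)"
  have Lp: "?L p = r" by simp
  have Llt: "?L k = sh r (\<pi> (Suc k))" if "k < p" for k using that by (simp add: ins_def un_def)
  have Lgt: "?L k = sh r (\<pi> k)" if "p < k" for k using that by (simp add: ins_def un_def)
  {
    assume x: "x \<in> insert_config n \<pi> r p i"
    show "x \<in> conf n ?L (Ps p 0 p) i"
    proof (cases "i = int p \<and> x = r")
      case True
      have "Ps p 0 p p = int p" by (simp add: Ps_def)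
      then show ?thesis using p Lp True unfolding conf_def by blast
    next
      case False
      have x1: "x \<in> (if 1 \<le> i \<and> i \<le> int n then {if \<pi> (nat i) < r then \<pi> (nat i) else \<pi> (nat i) + 1} else {})"
        using x False unfolding insert_config_def by (auto split: if_split_asm)
      then have i: "1 \<le> i" "i \<le> int n" by (auto split: if_split_asm)
      then have xv: "x = sh r (\<pi> (nat i))" using x1 by (simp add: sh_def)
      define j where "j = nat i"
      have ij: "i = int j" "1 \<le> j" "j \<le> n" using i by (auto simp: j_def)
      have xj: "x = sh r (\<pi> j)" using xv by (simp add: j_def)
      show ?thesis
      proof (cases "j \<le> p")
        case True
        have "Ps p 0 p (j - 1) = i" "?L (j - 1) = x" "j - 1 \<le> n"
          using True ij xj Llt[of "j-1"] by (auto simp: Ps_def)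
        then show ?thesis unfolding conf_def by blast
      next
        case False
        have "Ps p 0 p j = i" "?L j = x" "j \<le> n"
          using False ij xj Lgt[of j] by (auto simp: Ps_def)
        then show ?thesis unfolding conf_def by blast
      qed
    qed
  }
  {
    assume x: "x \<in> conf n ?L (Ps p 0 p) i"
    then obtain k where k: "k \<le> n" "Ps p 0 p k = i" "?L k = x" by (auto simp: conf_def)
    consider "k = p" | "k < p" | "p < k" by linarith
    then show "x \<in> insert_config n \<pi> r p i"
    proof cases
      case 1 then show ?thesis using k ic_mem2 by (auto simp: Ps_def)
    next
      case 2
      then have "i = int (Suc k)" "x = sh r (\<pi> (Suc k))" using k Llt[of k] by (auto simp: Ps_def)
      then show ?thesis using k 2 p ic_mem[of "Suc k" n r \<pi> p] by simp
    next
      case 3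
      then have "i = int k" "x = sh r (\<pi> k)" using k Lgt[of k] by (auto simp: Ps_def)
      then show ?thesis using k 3 p ic_mem[of k n r \<pi> p] by simp
    qed
  }
qed



lemma init_Inv: "Inv (insert_config n \<pi> r p)"
proof -
  let ?c = "insert_config n \<pi> r p"
  define A where "A i = (if 1 \<le> i \<and> i \<le> int n then {if \<pi> (nat i) < r then \<pi> (nat i) else \<pi> (nat i) + 1} else {})" for i :: int
  define B where "B i = (if i = int p then {r} else ({} :: nat set))" for i :: int
  have c: "?c i = A i \<union> B i" for i by (simp add: insert_config_def A_def B_def)
  have fA: "finite (A i)" "card (A i) \<le> 1" for i by (auto simp: A_def)
  have fB: "finite (B i)" "card (B i) \<le> 1" for i by (auto simp: B_def)
  have cle: "card (?c i) \<le> card (A i) + card (B i)" for i unfolding c by (rule card_Un_le)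
  have fin: "finite (?c i) \<and> card (?c i) \<le> 2" for i using fA[of i] fB[of i] cle[of i] c[of i] by simp
  have two: "i = int p" if "card (?c i) = 2" for i
  proof (rule ccontr)
    assume "i \<noteq> int p"
    then have "B i = {}" by (simp add: B_def)
    then show False using that cle[of i] fA[of i] by simp
  qed
  show ?thesis unfolding Inv_def
  proof (intro conjI)
    show "\<forall>i. finite (?c i) \<and> card (?c i) \<le> 2" using fin by blast
    show "\<forall>i j. i < j \<and> card (?c i) = 2 \<and> card (?c j) = 2 \<longrightarrow> (\<exists>k. i < k \<and> k < j \<and> ?c k = {})"
    proof (intro allI impI)
      fix i j :: int assume h: "i < j \<and> card (?c i) = 2 \<and> card (?c j) = 2"
      then have "i = int p" "j = int p" using two by auto
      then show "\<exists>k. i < k \<and> k < j \<and> ?c k = {}" using h by simp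
    qed
  qed
qed

lemma toppleable_iff:
  assumes n: "1 \<le> n" and p: "1 \<le> p" "p \<le> n" and r: "1 \<le> r" "r \<le> n + 1"
    and \<pi>: "\<pi> permutes {1..n}"
  shows "toppleable n r p \<pi> \<longleftrightarrow> ins (p+1) r \<pi> \<in> vesztergombi p (n - p + 1)"
proof -
  let ?w = "ins (p+1) r \<pi>"
  let ?L = "\<lambda>k. ?w (Suc k)"
  have wp: "?w permutes {1..n+1}" using ins_perm[of \<pi> "n+1" "p+1" r] \<pi> p r by simp
  have PL: "Perm n ?L"
  proof -
    have "bij_betw Suc {0..n} {1..Suc n}"
      by (rule bij_betw_byWitness[where f' = "\<lambda>x. x - 1"]) auto
    moreover have "bij_betw ?w {1..Suc n} {1..Suc n}" using permutes_imp_bij[OF wp] by simp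
    ultimately have "bij_betw (?w \<circ> Suc) {0..n} {1..Suc n}" by (rule bij_betw_trans)
    then show ?thesis by (simp add: Perm_def comp_def)
  qed
  let ?Lf = "net p 0 (n + 1 - p) ?L"
  let ?cf = "conf n ?Lf (Ps p (n + 1 - p) p)"
  have c0: "insert_config n \<pi> r p = conf n ?L (Ps p 0 p)" by (rule init_conf[OF p])
  have reach: "topple_step\<^sup>*\<^sup>* (insert_config n \<pi> r p) ?cf"
    using net_chain[OF PL p(1), of 0 "n + 1 - p"] c0 p by simp
  have stf: "stable ?cf" by (rule final_stable[OF p])
  have rdf: "read_config n ?cf = map ?Lf [0..<Suc n]" by (rule final_read[OF p])
  have "toppleable n r p \<pi> \<longleftrightarrow> map ?Lf [0..<Suc n] = [1..<n+2]"
  proof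
    assume "toppleable n r p \<pi>"
    then obtain c where c: "topple_step\<^sup>*\<^sup>* (insert_config n \<pi> r p) c" "stable c" "read_config n c = [1..<n+2]"
      unfolding toppleable_def by blast
    have "c = ?cf" using unique_nf[OF init_Inv c(1) reach c(2) stf] .
    then show "map ?Lf [0..<Suc n] = [1..<n+2]" using c(3) rdf by simp
  next
    assume "map ?Lf [0..<Suc n] = [1..<n+2]"
    then show "toppleable n r p \<pi>" unfolding toppleable_def using reach stf rdf by auto
  qed
  also have "\<dots> \<longleftrightarrow> (\<forall>k\<le>n. ?Lf k = k + 1)"
  proof
    assume h: "map ?Lf [0..<Suc n] = [1..<n+2]"
    show "\<forall>k\<le>n. ?Lf k = k + 1"
    proof (intro allI impI)
      fix k assume "k \<le> n"
      have "map ?Lf [0..<Suc n] ! k = [1..<n+2] ! k" using h by simp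
      then show "?Lf k = k + 1" using \<open>k \<le> n\<close> by (simp add: nth_map_upt del: upt_Suc)
    qed
  next
    assume h: "\<forall>k\<le>n. ?Lf k = k + 1"
    have "map ?Lf [0..<Suc n] = map Suc [0..<Suc n]" using h by (intro map_cong) auto
    then show "map ?Lf [0..<Suc n] = [1..<n+2]" by (simp only: map_Suc_upt) simp
  qed
  also have "\<dots> \<longleftrightarrow> Vs n p 0 ?L" using net_sorted_iff[OF PL p] by simp
  also have "\<dots> \<longleftrightarrow> ?w \<in> vesztergombi p (n - p + 1)"
  proof
    assume V: "Vs n p 0 ?L"
    have "\<forall>i\<in>{1..p + (n - p + 1)}. i \<le> ?w i + p \<and> ?w i \<le> i + (n - p + 1)"
    proof
      fix i assume i: "i \<in> {1..p + (n - p + 1)}"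
      have "i - 1 \<le> n" using i p by auto
      then have "(i - 1) + 1 \<le> ?L (i - 1) + p \<and> ?L (i - 1) + 0 + p \<le> n + (i - 1) + 2"
        using VsD[OF V, of "i - 1"] by simp
      then show "i \<le> ?w i + p \<and> ?w i \<le> i + (n - p + 1)" using i p by auto
    qed
    then show "?w \<in> vesztergombi p (n - p + 1)" using wp p by (simp add: vesz_iff)
  next
    assume "?w \<in> vesztergombi p (n - p + 1)"
    then have h: "\<forall>i\<in>{1..p + (n - p + 1)}. i \<le> ?w i + p \<and> ?w i \<le> i + (n - p + 1)" by (simp add: vesz_iff)
    show "Vs n p 0 ?L" unfolding Vs_def
    proof (intro allI impI)
      fix k assume k: "0 \<le> k \<and> k \<le> n"
      have "Suc k \<in> {1..p + (n - p + 1)}" using k p by auto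
      then have "Suc k \<le> ?w (Suc k) + p \<and> ?w (Suc k) \<le> Suc k + (n - p + 1)" using h by blast
      then show "k + 1 \<le> ?L k + p \<and> ?L k + 0 + p \<le> n + k + 2" using p by auto
    qed
  qed
  finally show ?thesis .
qed


lemma inv_vesz:
  assumes w: "w permutes {1..a+b}" and v: "w \<in> vesztergombi a b"
  shows "inv w \<in> vesztergombi b a"
proof -
  have c: "\<forall>i\<in>{1..a+b}. i \<le> w i + a \<and> w i \<le> i + b" using v by (simp add: vesz_iff)
  have "\<forall>j\<in>{1..b+a}. j \<le> inv w j + b \<and> inv w j \<le> j + a"
  proof
    fix j assume j: "j \<in> {1..b+a}"
    have j': "j \<in> {1..a+b}" using j by (simp add: add.commute)
    have ij: "inv w j \<in> {1..a+b}" using perm_range[OF permutes_inv[OF w] j'] .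
    have "w (inv w j) = j" using permutes_inverses(1)[OF w] by simp
    then show "j \<le> inv w j + b \<and> inv w j \<le> j + a" using c ij by force
  qed
  moreover have "inv w permutes {1..b+a}" using permutes_inv[OF w] by (simp add: add.commute)
  ultimately show ?thesis by (simp add: vesz_iff)
qed

theorem proposition4p5:
  fixes n p r :: nat
  assumes "1 \<le> n" and "1 \<le> p" and "p \<le> n" and "1 \<le> r" and "r \<le> n + 1"
  shows "(\<exists>f. bij_betw f (toppleable_perms n r p)
              {\<sigma> \<in> vesztergombi (n - p + 1) p. inv \<sigma> (p + 1) = r})
       \<and> (\<exists>g. bij_betw g (toppleable_perms n r p)
              {\<tau> \<in> callan (n - p + 1) p. \<tau> 1 = r})"
proof -
  note n = assms(1) and p = assms(2,3) and r = assms(4,5)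
  let ?T = "toppleable_perms n r p"
  let ?W = "{w \<in> vesztergombi p (n - p + 1). w (p + 1) = r}"
  let ?V = "{\<sigma> \<in> vesztergombi (n - p + 1) p. inv \<sigma> (p + 1) = r}"
  have NN: "p + (n - p + 1) = n + 1" "n - p + 1 + p = n + 1" using p by auto
  have b1: "bij_betw (ins (p+1) r) ?T ?W"
  proof (rule bij_betw_byWitness[where f' = "del (p+1) r"])
    show "\<forall>a\<in>?T. del (p + 1) r (ins (p + 1) r a) = a" by (simp add: del_ins)
    show "\<forall>a'\<in>?W. ins (p + 1) r (del (p + 1) r a') = a'"
      using ins_del by (auto simp: vesz_iff)
    show "ins (p + 1) r ` ?T \<subseteq> ?W"
    proof
      fix w assume "w \<in> ins (p + 1) r ` ?T"
      then obtain \<pi> where "\<pi> \<in> ?T" "w = ins (p+1) r \<pi>" by blast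
      then show "w \<in> ?W" using toppleable_iff[OF n p r] by (auto simp: toppleable_perms_def)
    qed
    show "del (p + 1) r ` ?W \<subseteq> ?T"
    proof
      fix \<pi> assume "\<pi> \<in> del (p + 1) r ` ?W"
      then obtain w where w: "w \<in> ?W" "\<pi> = del (p+1) r w" by blast
      then have wp: "w permutes {1..n+1}" using NN by (simp add: vesz_iff)
      have pp: "\<pi> permutes {1..n}" using del_perm[OF wp, of "p+1" r] w p by simp
      have "ins (p+1) r \<pi> = w" using ins_del[OF wp, of "p+1" r] w by simp
      then have "toppleable n r p \<pi>" using toppleable_iff[OF n p r pp] w by simp
      then show "\<pi> \<in> ?T" using pp by (simp add: toppleable_perms_def)
    qed
  qed
  have b2: "bij_betw inv ?W ?V"
  proof (rule bij_betw_byWitness[where f' = inv])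
    show "\<forall>a\<in>?W. inv (inv a) = a" using permutes_inv_inv by (auto simp: vesz_iff)
    show "\<forall>a'\<in>?V. inv (inv a') = a'" using permutes_inv_inv by (auto simp: vesz_iff)
    show "inv ` ?W \<subseteq> ?V"
    proof
      fix \<sigma> assume "\<sigma> \<in> inv ` ?W"
      then obtain w where w: "w \<in> ?W" "\<sigma> = inv w" by blast
      then have wp: "w permutes {1..p + (n - p + 1)}" by (simp add: vesz_iff)
      have "\<sigma> \<in> vesztergombi (n - p + 1) p" using inv_vesz[OF wp] w by simp
      moreover have "inv \<sigma> (p + 1) = r" using w permutes_inv_inv[OF wp] by simp
      ultimately show "\<sigma> \<in> ?V" by simp
    qed
    show "inv ` ?V \<subseteq> ?W"
    proof
      fix w assume "w \<in> inv ` ?V"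
      then obtain \<sigma> where s: "\<sigma> \<in> ?V" "w = inv \<sigma>" by blast
      then have sp: "\<sigma> permutes {1..(n - p + 1) + p}" by (simp add: vesz_iff)
      have "w \<in> vesztergombi p (n - p + 1)" using inv_vesz[OF sp] s by simp
      moreover have "w (p + 1) = r" using s by simp
      ultimately show "w \<in> ?W" by simp
    qed
  qed
  have bf: "bij_betw (inv \<circ> ins (p+1) r) ?T ?V" by (rule bij_betw_trans[OF b1 b2])
  have VV: "?V = Vr (n - p + 1) p r"
  proof (intro equalityI subsetI)
    fix \<sigma> assume s: "\<sigma> \<in> ?V"
    then have sp: "\<sigma> permutes {1..(n - p + 1) + p}" by (simp add: vesz_iff)
    then have "\<sigma> r = p + 1" using s permutes_inv_eq[OF sp] by auto
    then show "\<sigma> \<in> Vr (n - p + 1) p r" using s by (simp add: Vr_def)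
  next
    fix \<sigma> assume s: "\<sigma> \<in> Vr (n - p + 1) p r"
    then have sp: "\<sigma> permutes {1..(n - p + 1) + p}" by (simp add: Vr_def vesz_iff)
    then have "inv \<sigma> (p + 1) = r" using s permutes_inv_eq[OF sp] by (auto simp: Vr_def)
    then show "\<sigma> \<in> ?V" using s by (simp add: Vr_def)
  qed
  have "card ?T = card ?V" by (rule bij_betw_same_card[OF bf])
  also have "\<dots> = card (Vr (n - p + 1) p r)" using VV by simp
  also have "\<dots> = card (Cr (n - p + 1) p r)" using main_count[of "n - p + 1" p] p r by auto
  finally have cT: "card ?T = card {\<tau> \<in> callan (n - p + 1) p. \<tau> 1 = r}" by (simp add: Cr_def)
  have fT: "finite ?T"
  proof -
    have "?T \<subseteq> {\<pi>. \<pi> permutes {1..n}}" by (auto simp: toppleable_perms_def)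
    then show ?thesis using finite_permutations[of "{1..n}"] finite_subset by auto
  qed
  have fC: "finite {\<tau> \<in> callan (n - p + 1) p. \<tau> 1 = r}" using Cr_finite by (simp add: Cr_def)
  have "\<exists>g. bij_betw g ?T {\<tau> \<in> callan (n - p + 1) p. \<tau> 1 = r}"
    by (rule finite_same_card_bij[OF fT fC cT])
  then show ?thesis using bf by blast
qed

end
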